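(* Let $m_0$ be a positive integer with the covering property. There exists $\zeta_2>0$, not depending on $d$, such that if $0\le\zeta<\zeta_2$, then there exist a positive constant $\Lambda_2=\Lambda_2(\gamma,N,m_0,\zeta)$ and almost surely finite positive random variables $C^l_2$ ($1\le l\le d$) such that, with $C_2:=\max_{1\le l\le d}C^l_2$, almost surely for all $n\ge0$: $$\mathcal D(\mathfrak x^l_n)\le C^l_2\,e^{-\Lambda_2 n}\quad(1\le l\le d),\qquad \max_{i,j}\|\mathbf x^i_n-\mathbf x^j_n\|_\infty\le C_2\,e^{-\Lambda_2 n}.$$
   Context: Setting (random batch CBO). Fix integers $N\ge2$, $d\ge1$, batch size $P\ge2$, drift $\gamma\in(0,1)$, noise level $\zeta\ge0$; $\mathcal N=\{1,\dots,N\}$. Weight functions $\omega_{S,j}:(\mathbb R^d)^N\to[0,\infty)$ for nonempty $S\subseteq\mathcal N$, $j\in\mathcal N$, with $\sum_{j\in S}\omega_{S,j}=1$ and $\omega_{S,j}=0$ for $j\notin S$. $\mathcal A$ is the set of partitions of $\mathcal N$ into $\lceil N/P\rceil$ batches, all of size $P$ except possibly one of size at most $P$; $(\mathcal B^n)_{n\ge0}$ i.i.d. uniform on $\mathcal A$; $[i]_n$ is the batch of $\mathcal B^n$ containing $i$. Noise arrays $(\eta^{i,l}_n)_{i,l}$ are i.i.d. in $n$ with $\mathbb E\eta^{i,l}_n=0$, $\mathbb E|\eta^{i,l}_n|^2\le\zeta^2$; initial data $X_0$ (deterministic or random), batches, and noises are mutually independent. The dynamics is $\mathbf x^i_{n+1}=\mathbf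 x^i_n-\gamma(\mathbf x^i_n-\bar{\mathbf x}^{[i]_n,*}_n)-\sum_{l=1}^d(x^{i,l}_n-\bar x^{[i]_n,*,l}_n)\eta^{i,l}_n\mathbf e_l$ with $\bar{\mathbf x}^{S,*}_n=\sum_j\omega_{S,j}(X_n)\mathbf x^j_n$, $X_n=(\mathbf x^1_n,\dots,\mathbf x^N_n)$. Let $\mathfrak x^l_n:=(x^{1,l}_n,\dots,x^{N,l}_n)^\top$ and $\mathcal D(\mathbf z):=\max_iz_i-\min_iz_i$. A positive integer $m_0$ has the covering property if there exist partitions $\mathcal P^1,\dots,\mathcal P^{m_0}\in\mathcal A$ such that every pair $i,j\in\mathcal N$ lies in a common block of some $\mathcal P^k$. *)

theory Defs
  imports "HOL-Probability.Probability" "HOL-Library.Disjoint_Sets"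
begin

text \<open>Particles are indexed by 1..N, coordinates by 1..d.
  A configuration in (R^d)^N is an element of the extensional function space
  with carrier {1..N} -> {1..d} -> real.\<close>

definition stateM :: "nat \<Rightarrow> nat \<Rightarrow> (nat \<Rightarrow> nat \<Rightarrow> real) measure" where
  "stateM N d = (\<Pi>\<^sub>M i\<in>{1..N}. \<Pi>\<^sub>M l\<in>{1..d}. (borel :: real measure))"

definition arr :: "nat \<Rightarrow> nat \<Rightarrow> (nat \<Rightarrow> nat \<Rightarrow> 'a \<Rightarrow> real) \<Rightarrow> 'a \<Rightarrow> (nat \<Rightarrow> nat \<Rightarrow> real)" where
  "arr N d y \<omega> = (\<lambda>i\<in>{1..N}. \<lambda>l\<in>{1..d}. y i l \<omega>)"

definition batch_partitions :: "nat \<Rightarrow> nat \<Rightarrow> nat set set set" where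
  "batch_partitions N P = {Q. partition_on {1..N} Q
      \<and> card Q = nat \<lceil>real N / real P\<rceil>
      \<and> (\<forall>S\<in>Q. card S \<le> P)
      \<and> (\<exists>S0\<in>Q. \<forall>S\<in>Q. S \<noteq> S0 \<longrightarrow> card S = P)}"

definition blk :: "nat set set \<Rightarrow> nat \<Rightarrow> nat set" where
  "blk Q i = (THE S. S \<in> Q \<and> i \<in> S)"

definition covering_property :: "nat \<Rightarrow> nat \<Rightarrow> nat \<Rightarrow> bool" where
  "covering_property N P m0 \<longleftrightarrow> 0 < m0 \<and>
     (\<exists>Ps :: nat \<Rightarrow> nat set set. (\<forall>k\<in>{1..m0}. Ps k \<in> batch_partitions N P) \<and>
        (\<forall>i\<in>{1..N}. \<forall>j\<in>{1..N}. \<exists>k\<in>{1..m0}. \<exists>S\<in>Ps k. i \<in> S \<and> j \<in> S))"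

definition admissible_weights ::
  "nat \<Rightarrow> nat \<Rightarrow> (nat set \<Rightarrow> nat \<Rightarrow> (nat \<Rightarrow> nat \<Rightarrow> real) \<Rightarrow> real) \<Rightarrow> bool" where
  "admissible_weights N d w \<longleftrightarrow>
     (\<forall>S j. S \<noteq> {} \<and> S \<subseteq> {1..N} \<and> j \<in> {1..N} \<longrightarrow> w S j \<in> borel_measurable (stateM N d)) \<and>
     (\<forall>S. S \<noteq> {} \<and> S \<subseteq> {1..N} \<longrightarrow> (\<forall>X\<in>space (stateM N d).
        (\<forall>j\<in>{1..N}. 0 \<le> w S j X) \<and> (\<forall>j\<in>{1..N}. j \<notin> S \<longrightarrow> w S j X = 0) \<and>
        (\<Sum>j\<in>S. w S j X) = 1))"

datatype rv_index = Init | Batch nat | Noise nat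

definition rbcbo_model ::
  "nat \<Rightarrow> nat \<Rightarrow> real \<Rightarrow> real \<Rightarrow> nat \<Rightarrow>
   (nat set \<Rightarrow> nat \<Rightarrow> (nat \<Rightarrow> nat \<Rightarrow> real) \<Rightarrow> real) \<Rightarrow> 'a measure \<Rightarrow>
   (nat \<Rightarrow> 'a \<Rightarrow> nat set set) \<Rightarrow> (nat \<Rightarrow> nat \<Rightarrow> nat \<Rightarrow> 'a \<Rightarrow> real) \<Rightarrow>
   (nat \<Rightarrow> nat \<Rightarrow> 'a \<Rightarrow> real) \<Rightarrow> (nat \<Rightarrow> nat \<Rightarrow> nat \<Rightarrow> 'a \<Rightarrow> real) \<Rightarrow> bool" where
  "rbcbo_model N P \<gamma> \<zeta> d w M B \<eta> X0 x \<longleftrightarrow>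
     prob_space M \<and>
     admissible_weights N d w \<and>
     \<comment> \<open>batches: i.i.d. uniform on A\<close>
     (\<forall>n. B n \<in> measurable M (count_space UNIV) \<and>
          (\<forall>\<omega>\<in>space M. B n \<omega> \<in> batch_partitions N P) \<and>
          (\<forall>Q\<in>batch_partitions N P.
              measure M {\<omega>\<in>space M. B n \<omega> = Q} = 1 / real (card (batch_partitions N P)))) \<and>
     \<comment> \<open>initial data\<close>
     arr N d X0 \<in> measurable M (stateM N d) \<and>
     \<comment> \<open>noise arrays: identically distributed in n, centred, second moment at most zeta^2\<close>
     (\<forall>n. arr N d (\<eta> n) \<in> measurable M (stateM N d) \<and>
          distr M (stateM N d) (arr N d (\<eta> n)) = distr M (stateM N d) (arr N d (\<eta> 0)) \<and>
          (\<forall>i\<in>{1..N}. \<forall>l\<in>{1..d}.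
              integrable M (\<eta> n i l) \<and> (\<integral>\<omega>. \<eta> n i l \<omega> \<partial>M) = 0 \<and>
              integrable M (\<lambda>\<omega>. (\<eta> n i l \<omega>)\<^sup>2) \<and> (\<integral>\<omega>. (\<eta> n i l \<omega>)\<^sup>2 \<partial>M) \<le> \<zeta>\<^sup>2)) \<and>
     \<comment> \<open>mutual independence of X0, all batches and all noise arrays\<close>
     prob_space.indep_sets M (\<lambda>k. case k of
         Init \<Rightarrow> {arr N d X0 -` A \<inter> space M | A. A \<in> sets (stateM N d)}
       | Batch n \<Rightarrow> {B n -` A \<inter> space M | A. A \<in> sets (count_space UNIV)}
       | Noise n \<Rightarrow> {arr N d (\<eta> n) -` A \<inter> space M | A. A \<in> sets (stateM N d)}) UNIV \<and>
     \<comment> \<open>dynamics\<close>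
     (\<forall>\<omega>\<in>space M. \<forall>i\<in>{1..N}. \<forall>l\<in>{1..d}. x 0 i l \<omega> = X0 i l \<omega>) \<and>
     (\<forall>n. \<forall>\<omega>\<in>space M. \<forall>i\<in>{1..N}. \<forall>l\<in>{1..d}.
        (let S = blk (B n \<omega>) i;
             xbar = (\<Sum>j\<in>{1..N}. w S j (arr N d (x n) \<omega>) * x n j l \<omega>)
         in x (Suc n) i l \<omega> = x n i l \<omega> - \<gamma> * (x n i l \<omega> - xbar)
                               - (x n i l \<omega> - xbar) * \<eta> n i l \<omega>))"

definition spread :: "nat \<Rightarrow> (nat \<Rightarrow> real) \<Rightarrow> real" where
  "spread N z = (MAX i\<in>{1..N}. z i) - (MIN i\<in>{1..N}. z i)"

end

theory Submission
  imports Defs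
begin


lemma convex_lower:
  fixes I :: "nat set" and W z :: "nat \<Rightarrow> real"
  assumes "finite I" "\<And>c. c \<in> I \<Longrightarrow> 0 \<le> W c" "(\<Sum>c\<in>I. W c) = 1" "\<And>c. c \<in> I \<Longrightarrow> L \<le> z c"
  shows "L \<le> (\<Sum>c\<in>I. W c * z c)"
proof -
  have "L = (\<Sum>c\<in>I. W c * L)" using assms(3) by (simp add: sum_distrib_right[symmetric])
  also have "\<dots> \<le> (\<Sum>c\<in>I. W c * z c)"
    by (rule sum_mono) (simp add: assms(2,4) mult_left_mono)
  finally show ?thesis .
qed

lemma hub_lower:
  fixes I :: "nat set" and W z :: "nat \<Rightarrow> real"
  assumes "finite I" "\<And>c. c \<in> I \<Longrightarrow> 0 \<le> W c" "(\<Sum>c\<in>I. W c) = 1" "\<And>c. c \<in> I \<Longrightarrow> L \<le> z c"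
    and "h \<in> I" "0 < P" "1 / P \<le> W h"
  shows "L + (1/P) * (z h - L) \<le> (\<Sum>c\<in>I. W c * z c)"
proof -
  have "(\<Sum>c\<in>I. W c * z c) - L = (\<Sum>c\<in>I. W c * (z c - L))"
    using assms(3) by (simp add: right_diff_distrib sum_subtractf sum_distrib_right[symmetric])
  also have "\<dots> \<ge> W h * (z h - L)"
    by (rule member_le_sum[OF assms(5)]) (auto simp: assms(1,2,4))
  also have "W h * (z h - L) \<ge> (1/P) * (z h - L)"
    using assms(4)[OF assms(5)] assms(7) mult_right_mono[of "1/P" "W h" "z h - L"] by simp
  finally show ?thesis by simp
qed

locale dyn =
  fixes I :: "nat set" and z :: "nat \<Rightarrow> nat \<Rightarrow> real" and W :: "nat \<Rightarrow> nat \<Rightarrow> nat \<Rightarrow> real"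
    and e :: "nat \<Rightarrow> nat \<Rightarrow> real" and \<gamma> :: real
  assumes fin: "finite I" and ne: "I \<noteq> {}"
  and Wnn: "\<And>k i c. i \<in> I \<Longrightarrow> c \<in> I \<Longrightarrow> 0 \<le> W k i c"
  and Wsum: "\<And>k i. i \<in> I \<Longrightarrow> (\<Sum>c\<in>I. W k i c) = 1"
  and g0: "0 \<le> \<gamma>" and g1: "\<gamma> \<le> 1"
  and step: "\<And>k i. i \<in> I \<Longrightarrow> z (Suc k) i = z k i - \<gamma> * (z k i - (\<Sum>c\<in>I. W k i c * z k c))
                 - (z k i - (\<Sum>c\<in>I. W k i c * z k c)) * e k i"
begin

definition bb where "bb k i = (\<Sum>c\<in>I. W k i c * z k c)"

lemma step': "i \<in> I \<Longrightarrow> z (Suc k) i = (1 - \<gamma>) * z k i + \<gamma> * bb k i - (z k i - bb k i) * e k i"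
  using step[of i k] unfolding bb_def by (simp add: algebra_simps)

lemma neg: "dyn I (\<lambda>k i. - z k i) W e \<gamma>"
proof
  fix k i assume i: "i \<in> I"
  show "- z (Suc k) i = - z k i - \<gamma> * (- z k i - (\<Sum>c\<in>I. W k i c * - z k c)) -
          (- z k i - (\<Sum>c\<in>I. W k i c * - z k c)) * e k i"
    using step[OF i, of k] by (simp add: sum_negf algebra_simps)
qed (use fin ne Wnn Wsum g0 g1 in auto)

lemma bb_lower: "i \<in> I \<Longrightarrow> (\<And>c. c \<in> I \<Longrightarrow> L \<le> z k c) \<Longrightarrow> L \<le> bb k i"
  unfolding bb_def by (rule convex_lower) (auto simp: fin Wnn Wsum)

lemma lower_box:
  assumes noise: "\<And>k i. n \<le> k \<Longrightarrow> i \<in> I \<Longrightarrow> \<bar>(z k i - bb k i) * e k i\<bar> \<le> \<beta> k"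
    and lb: "\<And>c. c \<in> I \<Longrightarrow> L \<le> z n c"
  shows "c \<in> I \<Longrightarrow> L - (\<Sum>q\<in>{n..<n+t}. \<beta> q) \<le> z (n+t) c"
proof (induction t arbitrary: c)
  case 0 then show ?case using lb by simp
next
  case (Suc t)
  let ?s = "(\<Sum>q\<in>{n..<n+t}. \<beta> q)"
  have b: "L - ?s \<le> bb (n+t) c" using Suc.IH by (intro bb_lower[OF Suc.prems]) auto
  have zz: "L - ?s \<le> z (n+t) c" using Suc.IH Suc.prems by auto
  have y: "L - ?s \<le> (1 - \<gamma>) * z (n+t) c + \<gamma> * bb (n+t) c"
  proof -
    have "L - ?s = (1-\<gamma>) * (L - ?s) + \<gamma> * (L - ?s)" by (simp add: algebra_simps)
    also have "\<dots> \<le> (1 - \<gamma>) * z (n+t) c + \<gamma> * bb (n+t) c"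
      by (intro add_mono mult_left_mono zz b) (use g0 g1 in auto)
    finally show ?thesis .
  qed
  have nz: "(z (n+t) c - bb (n+t) c) * e (n+t) c \<le> \<beta> (n+t)"
    using noise[of "n+t" c] Suc.prems by auto
  show ?case using step'[OF Suc.prems, of "n+t"] y nz by simp
qed

lemma lower_pair:
  assumes noise: "\<And>k i. n \<le> k \<Longrightarrow> i \<in> I \<Longrightarrow> \<bar>(z k i - bb k i) * e k i\<bar> \<le> \<beta> k"
    and box: "\<And>k c. n \<le> k \<Longrightarrow> c \<in> I \<Longrightarrow> L - s k \<le> z k c"
    and s: "\<And>k. n \<le> k \<Longrightarrow> s (Suc k) = s k + \<beta> k"
    and s0: "\<And>k. n \<le> k \<Longrightarrow> 0 \<le> s k"
    and k0: "n \<le> k0" and i: "i \<in> I" and h: "h \<in> I" and P: "0 < P" and Wh: "1 / P \<le> W k0 i h"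
  shows "L - s (Suc k0 + t) + \<gamma> / P * (1-\<gamma>)^t * (z k0 h - L) \<le> z (Suc k0 + t) i"
proof (induction t)
  case 0
  have hb: "(L - s k0) + (1/P) * (z k0 h - (L - s k0)) \<le> bb k0 i"
    unfolding bb_def
    by (rule hub_lower[OF fin _ Wsum[OF i] _ h P Wh]) (auto intro: Wnn[OF i] box[OF k0])
  have hz: "0 \<le> z k0 h - (L - s k0)" using box[OF k0 h] by simp
  have "(1/P) * (z k0 h - L) \<le> (1/P) * (z k0 h - (L - s k0))"
    using s0[OF k0] P by (intro mult_left_mono) auto
  with hb have hb2: "(L - s k0) + (1/P) * (z k0 h - L) \<le> bb k0 i" by linarith
  have zi: "L - s k0 \<le> z k0 i" using box[OF k0 i] .
  have "(L - s k0) + \<gamma> * ((1/P) * (z k0 h - L)) = (1-\<gamma>) * (L - s k0) + \<gamma> * ((L - s k0) + (1/P) * (z k0 h - L))"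
    by (simp add: algebra_simps)
  also have "\<dots> \<le> (1 - \<gamma>) * z k0 i + \<gamma> * bb k0 i"
    by (intro add_mono mult_left_mono zi hb2) (use g0 g1 in auto)
  finally have y: "(L - s k0) + \<gamma> * ((1/P) * (z k0 h - L)) \<le> (1 - \<gamma>) * z k0 i + \<gamma> * bb k0 i" .
  have nz: "(z k0 i - bb k0 i) * e k0 i \<le> \<beta> k0" using noise[OF k0 i] by auto
  show ?case using step'[OF i, of k0] y nz s[OF k0] by simp
next
  case (Suc t)
  let ?k = "Suc k0 + t"
  have kn: "n \<le> ?k" using k0 by simp
  let ?\<tau> = "\<gamma> / P * (1-\<gamma>)^t * (z k0 h - L)"
  have b: "L - s ?k \<le> bb ?k i" by (intro bb_lower[OF i] box[OF kn])
  have "(L - s ?k) + (1-\<gamma>) * ?\<tau> = (1-\<gamma>) * (L - s ?k + ?\<tau>) + \<gamma> * (L - s ?k)"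
    by (simp add: algebra_simps)
  also have "\<dots> \<le> (1 - \<gamma>) * z ?k i + \<gamma> * bb ?k i"
    by (intro add_mono mult_left_mono Suc.IH b) (use g0 g1 in auto)
  finally have y: "(L - s ?k) + (1-\<gamma>) * ?\<tau> \<le> (1 - \<gamma>) * z ?k i + \<gamma> * bb ?k i" .
  have nz: "(z ?k i - bb ?k i) * e ?k i \<le> \<beta> ?k" using noise[OF kn i] by auto
  have "z (Suc ?k) i = (1 - \<gamma>) * z ?k i + \<gamma> * bb ?k i - (z ?k i - bb ?k i) * e ?k i" by (rule step'[OF i])
  moreover have "(1-\<gamma>) * ?\<tau> = \<gamma> / P * (1-\<gamma>)^(Suc t) * (z k0 h - L)" using P by (simp add: power_Suc field_simps)
  ultimately show ?case using y nz s[OF kn] by (simp only: add_Suc_right)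
qed

definition Mx where "Mx k = Max (z k ` I)"
definition Mn where "Mn k = Min (z k ` I)"
definition Dk where "Dk k = Mx k - Mn k"
definition eps where "eps k = (\<Sum>i\<in>I. \<bar>e k i\<bar>)"
definition beta where "beta k = eps k * Dk k"

lemma mm: "c \<in> I \<Longrightarrow> Mn k \<le> z k c \<and> z k c \<le> Mx k"
  unfolding Mn_def Mx_def using fin by auto

lemma Dk_nonneg: "0 \<le> Dk k"
  using mm[of "SOME c. c \<in> I" k] ne some_in_eq unfolding Dk_def by fastforce

lemma eps_nonneg: "0 \<le> eps k" unfolding eps_def by (simp add: sum_nonneg)

lemma beta_nonneg: "0 \<le> beta k" unfolding beta_def by (simp add: eps_nonneg Dk_nonneg)

lemma bb_in: "i \<in> I \<Longrightarrow> Mn k \<le> bb k i \<and> bb k i \<le> Mx k"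
proof
  assume i: "i \<in> I"
  show "Mn k \<le> bb k i" by (rule bb_lower[OF i]) (use mm in auto)
  have "- Mx k \<le> (\<Sum>c\<in>I. W k i c * (- z k c))"
    by (rule convex_lower) (use fin Wnn[OF i] Wsum[OF i] mm in auto)
  then show "bb k i \<le> Mx k" unfolding bb_def by (simp add: sum_negf)
qed

lemma noise_bd: "i \<in> I \<Longrightarrow> \<bar>(z k i - bb k i) * e k i\<bar> \<le> beta k"
proof -
  assume i: "i \<in> I"
  have a: "\<bar>z k i - bb k i\<bar> \<le> Dk k" using mm[OF i, of k] bb_in[OF i, of k] unfolding Dk_def by auto
  have b: "\<bar>e k i\<bar> \<le> eps k" unfolding eps_def by (rule member_le_sum[OF i]) (auto simp: fin)
  show ?thesis unfolding beta_def abs_mult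
    using mult_mono[OF a b] Dk_nonneg[of k] by (simp add: mult.commute)
qed

lemma neg_bb: "dyn.bb I (\<lambda>k i. - z k i) W k i = - bb k i"
  using neg unfolding dyn.bb_def[OF neg] bb_def by (simp add: sum_negf)


lemma neg_noise: "i \<in> I \<Longrightarrow> \<bar>(- z k i - dyn.bb I (\<lambda>k i. - z k i) W k i) * e k i\<bar> \<le> beta k"
proof -
  assume i: "i \<in> I"
  have "(- z k i - dyn.bb I (\<lambda>k i. - z k i) W k i) * e k i = - ((z k i - bb k i) * e k i)"
    by (simp add: neg_bb algebra_simps)
  then show ?thesis using noise_bd[OF i, of k] by (simp only: abs_minus_cancel)
qed

lemma box_both:
  assumes "c \<in> I"
  shows "Mn n - (\<Sum>q\<in>{n..<n+t}. beta q) \<le> z (n+t) c \<and> z (n+t) c \<le> Mx n + (\<Sum>q\<in>{n..<n+t}. beta q)"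
proof
  show "Mn n - (\<Sum>q\<in>{n..<n+t}. beta q) \<le> z (n+t) c"
    by (rule lower_box[OF _ _ assms]) (auto simp: noise_bd mm)
  have "- Mx n - (\<Sum>q\<in>{n..<n+t}. beta q) \<le> - z (n+t) c"
    by (rule dyn.lower_box[OF neg _ _ assms]) (auto simp: neg_noise mm)
  then show "z (n+t) c \<le> Mx n + (\<Sum>q\<in>{n..<n+t}. beta q)" by simp
qed

lemma spread_steps: "Dk (n+t) \<le> Dk n + 2 * (\<Sum>q\<in>{n..<n+t}. beta q)"
proof -
  let ?S = "(\<Sum>q\<in>{n..<n+t}. beta q)"
  have "Mx (n+t) \<le> Mx n + ?S" unfolding Mx_def[of "n+t"] using fin ne box_both by auto
  moreover have "Mn n - ?S \<le> Mn (n+t)" unfolding Mn_def[of "n+t"] using fin ne box_both by auto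
  ultimately show ?thesis unfolding Dk_def by linarith
qed

lemma contraction:
  assumes cover: "\<forall>i\<in>I. \<forall>j\<in>I. \<exists>k\<in>{n..<n+m}. (\<forall>c\<in>I. W k i c = W k j c) \<and> (\<exists>h\<in>I. 1/P \<le> W k i h)"
    and P: "0 < P"
  shows "Dk (n+m) \<le> (1 - \<gamma>/P*(1-\<gamma>)^(m-1)) * Dk n + 2 * (\<Sum>q\<in>{n..<n+m}. beta q)"
proof -
  define s where "s k = (\<Sum>q\<in>{n..<k}. beta q)" for k
  define T where "T = n + m"
  have sS: "s (Suc k) = s k + beta k" if "n \<le> k" for k using that unfolding s_def by simp
  have s0: "0 \<le> s k" for k unfolding s_def by (simp add: sum_nonneg beta_nonneg)
  have boxk: "Mn n - s k \<le> z k c \<and> z k c \<le> Mx n + s k" if "n \<le> k" "c \<in> I" for k c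
    using box_both[OF that(2), of n "k - n"] that(1) unfolding s_def by simp
  have "Mx T \<in> z T ` I" unfolding Mx_def using fin ne by simp
  then obtain i0 where i0: "i0 \<in> I" "z T i0 = Mx T" by auto
  have "Mn T \<in> z T ` I" unfolding Mn_def using fin ne by simp
  then obtain j0 where j0: "j0 \<in> I" "z T j0 = Mn T" by auto
  obtain k0 h where k0: "k0 \<in> {n..<n+m}" and Weq: "\<forall>c\<in>I. W k0 i0 c = W k0 j0 c"
    and h: "h \<in> I" and Wh: "1/P \<le> W k0 i0 h"
    using cover i0(1) j0(1) by blast
  have Wh': "1/P \<le> W k0 j0 h" using Wh Weq h by auto
  have k0n: "n \<le> k0" using k0 by simp
  define t where "t = T - Suc k0"
  have Tt: "Suc k0 + t = T" using k0 unfolding t_def T_def by auto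
  have tm: "t \<le> m - 1" using k0 unfolding t_def T_def by auto
  have lowj: "Mn n - s (Suc k0 + t) + \<gamma> / P * (1-\<gamma>)^t * (z k0 h - Mn n) \<le> z (Suc k0 + t) j0"
  proof (rule lower_pair[where \<beta>=beta])
    show "\<And>k i. n \<le> k \<Longrightarrow> i \<in> I \<Longrightarrow> \<bar>(z k i - bb k i) * e k i\<bar> \<le> beta k" by (rule noise_bd)
    show "\<And>k c. n \<le> k \<Longrightarrow> c \<in> I \<Longrightarrow> Mn n - s k \<le> z k c" using boxk by blast
  qed (use sS s0 k0n j0(1) h P Wh' in auto)
  have upi: "- Mx n - s (Suc k0 + t) + \<gamma> / P * (1-\<gamma>)^t * (- z k0 h - - Mx n) \<le> - z (Suc k0 + t) i0"
  proof (rule dyn.lower_pair[OF neg, where \<beta>=beta and s=s])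
    show "\<And>k i. n \<le> k \<Longrightarrow> i \<in> I \<Longrightarrow> \<bar>(- z k i - dyn.bb I (\<lambda>k i. - z k i) W k i) * e k i\<bar> \<le> beta k"
      by (rule neg_noise)
    show "\<And>k c. n \<le> k \<Longrightarrow> c \<in> I \<Longrightarrow> - Mx n - s k \<le> - z k c" using boxk by force
  qed (use sS s0 k0n i0(1) h P Wh in auto)
  define \<tau> where "\<tau> = \<gamma> / P * (1-\<gamma>)^t"
  have "(1-\<gamma>)^(m-1) \<le> (1-\<gamma>)^t" by (rule power_decreasing[OF tm]) (use g0 g1 in auto)
  then have tau: "\<gamma>/P*(1-\<gamma>)^(m-1) \<le> \<tau>" unfolding \<tau>_def using g0 P
    by (intro mult_left_mono) auto
  have e1: "Mn n - s T + \<tau> * (z k0 h - Mn n) \<le> z T j0" using lowj unfolding Tt \<tau>_def .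
  have e2: "- Mx n - s T + \<tau> * (- z k0 h - - Mx n) \<le> - z T i0" using upi unfolding Tt \<tau>_def .
  have "Dk T = z T i0 - z T j0" unfolding Dk_def using i0 j0 by simp
  also have "\<dots> \<le> (1 - \<tau>) * Dk n + 2 * s T"
    using e1 e2 unfolding Dk_def by (simp add: algebra_simps)
  also have "\<dots> \<le> (1 - \<gamma>/P*(1-\<gamma>)^(m-1)) * Dk n + 2 * s T"
    using tau Dk_nonneg[of n] by (intro add_mono mult_right_mono) (auto simp: s0)
  finally show ?thesis unfolding T_def s_def .
qed

end



lemma (in prob_space) indep2_nn:
  assumes ind: "indep_sets F (UNIV::bool set)"
   and fm: "f \<in> borel_measurable M" and fF: "\<And>A. A \<in> sets borel \<Longrightarrow> f -` A \<inter> space M \<in> F True"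
   and f0: "\<And>\<omega>. 0 \<le> f \<omega>"
   and gm: "g \<in> borel_measurable M" and gF: "\<And>A. A \<in> sets borel \<Longrightarrow> g -` A \<inter> space M \<in> F False"
   and g0: "\<And>\<omega>. 0 \<le> g \<omega>"
  shows "(\<integral>\<^sup>+\<omega>. ennreal (f \<omega> * g \<omega>) \<partial>M) = (\<integral>\<^sup>+\<omega>. ennreal (f \<omega>) \<partial>M) * (\<integral>\<^sup>+\<omega>. ennreal (g \<omega>) \<partial>M)"
proof -
  define X where "X b = (\<lambda>\<omega>. ennreal (if b then f \<omega> else g \<omega>))" for b
  have iv: "indep_vars (\<lambda>_. borel) X UNIV"
    unfolding indep_vars_def2
  proof
    show "\<forall>i\<in>UNIV. random_variable borel (X i)" using fm gm by (auto simp: X_def)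
    show "indep_sets (\<lambda>i. {X i -` A \<inter> space M |A. A \<in> sets borel}) UNIV"
    proof (rule indep_sets_mono_sets[OF ind])
      fix b :: bool
      show "{X b -` A \<inter> space M |A. A \<in> sets borel} \<subseteq> F b"
      proof safe
        fix A :: "ennreal set" assume A: "A \<in> sets borel"
        have "ennreal -` A \<in> sets borel" using measurable_sets[OF measurable_ennreal A] by simp
        then show "X b -` A \<inter> space M \<in> F b"
          using fF[of "ennreal -` A"] gF[of "ennreal -` A"] unfolding X_def
          by (cases b) (auto simp: vimage_def)
      qed
    qed
  qed
  have "(\<integral>\<^sup>+\<omega>. (\<Prod>i\<in>UNIV. X i \<omega>) \<partial>M) = (\<Prod>i\<in>UNIV. \<integral>\<^sup>+\<omega>. X i \<omega> \<partial>M)"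
    by (rule indep_vars_nn_integral[OF _ iv]) auto
  then show ?thesis using f0 g0 by (simp add: UNIV_bool X_def mult.commute ennreal_mult)
qed

lemma meas_cong_to: "f \<in> measurable M N \<Longrightarrow> (\<And>\<omega>. \<omega> \<in> space M \<Longrightarrow> f \<omega> = g \<omega>) \<Longrightarrow> g \<in> measurable M N"
  using measurable_cong by blast

lemma Int_stable_vimage: "Int_stable {f -` A \<inter> S | A. A \<in> sets N}"
  unfolding Int_stable_def
proof (safe)
  fix A B assume "A \<in> sets N" "B \<in> sets N"
  then show "\<exists>C. (f -` A \<inter> S) \<inter> (f -` B \<inter> S) = f -` C \<inter> S \<and> C \<in> sets N"
    by (intro exI[of _ "A \<inter> B"]) auto
qed

lemma bp_sub: "Q \<in> batch_partitions N P \<Longrightarrow> Q \<subseteq> Pow {1..N}"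
  unfolding batch_partitions_def using partition_onD1 by fastforce

lemma bp_finite: "finite (batch_partitions N P)"
proof -
  have "batch_partitions N P \<subseteq> Pow (Pow {1..N})" using bp_sub by blast
  then show ?thesis by (rule finite_subset) auto
qed

lemma blk_eq: assumes "Q \<in> batch_partitions N P" "S \<in> Q" "i \<in> S" shows "blk Q i = S"
  unfolding blk_def
proof (rule the_equality)
  show "S \<in> Q \<and> i \<in> S" using assms by auto
  fix S' assume "S' \<in> Q \<and> i \<in> S'"
  moreover have "disjoint Q" using assms(1) unfolding batch_partitions_def by (auto dest: partition_onD2)
  ultimately show "S' = S" using assms disjointD[of Q S' S] by blast
qed

lemma blk_in: assumes "Q \<in> batch_partitions N P" "i \<in> {1..N}" shows "blk Q i \<in> Q \<and> i \<in> blk Q i"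
proof -
  have "\<Union>Q = {1..N}" using assms(1) unfolding batch_partitions_def by (auto dest: partition_onD1)
  then have "i \<in> \<Union>Q" using assms(2) by simp
  then obtain S where "S \<in> Q" "i \<in> S" by blast
  then show ?thesis using blk_eq[OF assms(1)] by auto
qed

lemma blk_props: assumes "Q \<in> batch_partitions N P" "i \<in> {1..N}"
  shows "blk Q i \<noteq> {}" "blk Q i \<subseteq> {1..N}" "card (blk Q i) \<le> P" "finite (blk Q i)"
  using blk_in[OF assms] bp_sub[OF assms(1)] assms(1) unfolding batch_partitions_def
  by (auto intro: finite_subset)

lemma stateM_comp:
  assumes "g \<in> measurable F (stateM N d)" "i \<in> {1..N}" "l \<in> {1..d}"
  shows "(\<lambda>\<omega>. g \<omega> i l) \<in> borel_measurable F"
proof -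
  have "(\<lambda>\<omega>. g \<omega> i) \<in> measurable F (\<Pi>\<^sub>M l\<in>{1..d}. (borel :: real measure))"
    using measurable_compose[OF assms(1)[unfolded stateM_def] measurable_component_singleton[OF assms(2)]] .
  then show ?thesis
    using measurable_compose[OF _ measurable_component_singleton[OF assms(3)]] by blast
qed

lemma arr_meas:
  assumes "\<And>i l. i \<in> {1..N} \<Longrightarrow> l \<in> {1..d} \<Longrightarrow> y i l \<in> borel_measurable F"
  shows "arr N d y \<in> measurable F (stateM N d)"
  unfolding arr_def stateM_def
  by (intro measurable_restrict) (use assms in auto)

lemma arr_space: "arr N d y \<omega> \<in> space (stateM N d)"
  unfolding arr_def stateM_def by (simp add: space_PiM)

locale rbm =
  fixes N P :: nat and \<gamma> \<zeta> :: real and d :: nat and w and M :: "'a measure" and B \<eta> X0 x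
    and m0 :: nat and Ps :: "nat \<Rightarrow> nat set set"
  assumes model: "rbcbo_model N P \<gamma> \<zeta> d w M B \<eta> X0 x"
    and N2: "2 \<le> N" and P2: "2 \<le> P" and g0: "0 < \<gamma>" and g1: "\<gamma> < 1"
    and m0: "0 < m0" and Ps: "\<And>k. k \<in> {1..m0} \<Longrightarrow> Ps k \<in> batch_partitions N P"
    and cov: "\<And>i j. i \<in> {1..N} \<Longrightarrow> j \<in> {1..N} \<Longrightarrow> \<exists>k\<in>{1..m0}. \<exists>S\<in>Ps k. i \<in> S \<and> j \<in> S"
begin

sublocale prob_space M using model unfolding rbcbo_model_def by auto

lemma adm: "admissible_weights N d w" using model unfolding rbcbo_model_def by auto

lemma wmeas: "S \<noteq> {} \<Longrightarrow> S \<subseteq> {1..N} \<Longrightarrow> j \<in> {1..N} \<Longrightarrow> w S j \<in> borel_measurable (stateM N d)"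
  using adm unfolding admissible_weights_def by blast

lemma wprops: "S \<noteq> {} \<Longrightarrow> S \<subseteq> {1..N} \<Longrightarrow> X \<in> space (stateM N d) \<Longrightarrow>
   (\<forall>j\<in>{1..N}. 0 \<le> w S j X) \<and> (\<forall>j\<in>{1..N}. j \<notin> S \<longrightarrow> w S j X = 0) \<and> (\<Sum>j\<in>S. w S j X) = 1"
  using adm unfolding admissible_weights_def by blast

lemma Bmeas0: "B n \<in> measurable M (count_space UNIV)"
  and Bsp: "\<omega> \<in> space M \<Longrightarrow> B n \<omega> \<in> batch_partitions N P"
  and Bprob: "Q \<in> batch_partitions N P \<Longrightarrow> measure M {\<omega>\<in>space M. B n \<omega> = Q} = 1 / real (card (batch_partitions N P))"
  using model unfolding rbcbo_model_def by auto

lemma X0meas0: "arr N d X0 \<in> measurable M (stateM N d)"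
  using model unfolding rbcbo_model_def by auto

lemma etameas0: "arr N d (\<eta> n) \<in> measurable M (stateM N d)"
  and eta_int: "i \<in> {1..N} \<Longrightarrow> l \<in> {1..d} \<Longrightarrow> integrable M (\<lambda>\<omega>. (\<eta> n i l \<omega>)\<^sup>2)"
  and eta_mom: "i \<in> {1..N} \<Longrightarrow> l \<in> {1..d} \<Longrightarrow> (\<integral>\<omega>. (\<eta> n i l \<omega>)\<^sup>2 \<partial>M) \<le> \<zeta>\<^sup>2"
  using model unfolding rbcbo_model_def by auto

definition Egen :: "rv_index \<Rightarrow> 'a set set" where
  "Egen = (\<lambda>k. case k of
         Init \<Rightarrow> {arr N d X0 -` A \<inter> space M | A. A \<in> sets (stateM N d)}
       | Batch n \<Rightarrow> {B n -` A \<inter> space M | A. A \<in> sets (count_space UNIV)}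
       | Noise n \<Rightarrow> {arr N d (\<eta> n) -` A \<inter> space M | A. A \<in> sets (stateM N d)})"

lemma indep_all: "indep_sets Egen UNIV"
  using model unfolding rbcbo_model_def Egen_def by auto

lemma x0: "\<omega> \<in> space M \<Longrightarrow> i \<in> {1..N} \<Longrightarrow> l \<in> {1..d} \<Longrightarrow> x 0 i l \<omega> = X0 i l \<omega>"
  using model unfolding rbcbo_model_def by auto

lemma xS: "\<omega> \<in> space M \<Longrightarrow> i \<in> {1..N} \<Longrightarrow> l \<in> {1..d} \<Longrightarrow>
   x (Suc n) i l \<omega> = x n i l \<omega> - \<gamma> * (x n i l \<omega> - (\<Sum>j\<in>{1..N}. w (blk (B n \<omega>) i) j (arr N d (x n) \<omega>) * x n j l \<omega>))
       - (x n i l \<omega> - (\<Sum>j\<in>{1..N}. w (blk (B n \<omega>) i) j (arr N d (x n) \<omega>) * x n j l \<omega>)) * \<eta> n i l \<omega>"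
  using model unfolding rbcbo_model_def Let_def by auto

lemma Egen_pow: "Egen k \<subseteq> Pow (space M)"
  unfolding Egen_def by (auto split: rv_index.splits)

lemma Egen_sets: "Egen k \<subseteq> sets M"
  unfolding Egen_def using Bmeas0 X0meas0 etameas0 by (auto split: rv_index.splits)

definition Fs :: "rv_index set \<Rightarrow> 'a measure" where
  "Fs J = sigma (space M) (\<Union>k\<in>J. Egen k)"

lemma space_Fs[simp]: "space (Fs J) = space M"
  unfolding Fs_def using Egen_pow by (auto intro!: space_measure_of)

lemma sets_Fs: "sets (Fs J) = sigma_sets (space M) (\<Union>k\<in>J. Egen k)"
  unfolding Fs_def using Egen_pow by (auto intro!: sets_measure_of)

lemma subalg: "subalgebra M (Fs J)"
  unfolding subalgebra_def sets_Fs using Egen_sets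
  by (auto intro!: sets.sigma_sets_subset)

lemma meas_Fs:
  assumes "f \<in> measurable M N'" "{f -` A \<inter> space M | A. A \<in> sets N'} \<subseteq> (\<Union>k\<in>J. Egen k)"
  shows "f \<in> measurable (Fs J) N'"
  unfolding measurable_def
proof safe
  fix \<omega> assume "\<omega> \<in> space (Fs J)"
  then show "f \<omega> \<in> space N'" using measurable_space[OF assms(1)] by simp
next
  fix A assume "A \<in> sets N'"
  then have "f -` A \<inter> space M \<in> (\<Union>k\<in>J. Egen k)" using assms(2) by blast
  then show "f -` A \<inter> space (Fs J) \<in> sets (Fs J)" unfolding sets_Fs by auto
qed

lemma X0meas: "Init \<in> J \<Longrightarrow> arr N d X0 \<in> measurable (Fs J) (stateM N d)"
  by (rule meas_Fs[OF X0meas0]) (force simp: Egen_def)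

lemma Bmeas: "Batch n \<in> J \<Longrightarrow> B n \<in> measurable (Fs J) (count_space UNIV)"
  by (rule meas_Fs[OF Bmeas0]) (force simp: Egen_def)

lemma etameas: "Noise n \<in> J \<Longrightarrow> arr N d (\<eta> n) \<in> measurable (Fs J) (stateM N d)"
  by (rule meas_Fs[OF etameas0]) (force simp: Egen_def)

lemma eta_meas: "Noise n \<in> J \<Longrightarrow> i \<in> {1..N} \<Longrightarrow> l \<in> {1..d} \<Longrightarrow> \<eta> n i l \<in> borel_measurable (Fs J)"
  using stateM_comp[OF etameas] by (simp add: arr_def)

lemma BmeasA: "Batch n \<in> J \<Longrightarrow> B n \<in> measurable (Fs J) (count_space (batch_partitions N P))"
  unfolding measurable_count_space_eq2[OF bp_finite]
  using Bsp measurable_sets[OF Bmeas, of n J] by auto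

definition Past :: "nat \<Rightarrow> rv_index set" where
  "Past n = insert Init (Batch ` {..<n} \<union> Noise ` {..<n})"

lemma xmeas: "Past n \<subseteq> J \<Longrightarrow> i \<in> {1..N} \<Longrightarrow> l \<in> {1..d} \<Longrightarrow> x n i l \<in> borel_measurable (Fs J)"
proof (induction n arbitrary: i l)
  case 0
  have "Init \<in> J" using 0(1) by (simp add: Past_def)
  then have "(\<lambda>\<omega>. arr N d X0 \<omega> i l) \<in> borel_measurable (Fs J)"
    by (rule stateM_comp[OF X0meas 0(2,3)])
  moreover have eq: "\<omega> \<in> space (Fs J) \<Longrightarrow> arr N d X0 \<omega> i l = x 0 i l \<omega>" for \<omega>
    using x0 0 by (simp add: arr_def)
  ultimately show ?case by (rule meas_cong_to)
next
  case (Suc n)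
  have PJ: "Past n \<subseteq> J" using Suc.prems(1) by (auto simp: Past_def)
  have BJ: "Batch n \<in> J" "Noise n \<in> J" using Suc.prems(1) by (auto simp: Past_def)
  have ax: "arr N d (x n) \<in> measurable (Fs J) (stateM N d)"
    by (rule arr_meas) (use Suc.IH PJ in auto)
  define f where "f Q \<omega> = x n i l \<omega> - \<gamma> * (x n i l \<omega> - (\<Sum>j\<in>{1..N}. w (blk Q i) j (arr N d (x n) \<omega>) * x n j l \<omega>))
       - (x n i l \<omega> - (\<Sum>j\<in>{1..N}. w (blk Q i) j (arr N d (x n) \<omega>) * x n j l \<omega>)) * \<eta> n i l \<omega>" for Q \<omega>
  have fm: "f Q \<in> borel_measurable (Fs J)" if Q: "Q \<in> batch_partitions N P" for Q
  proof -
    have wm: "(\<lambda>\<omega>. w (blk Q i) j (arr N d (x n) \<omega>)) \<in> borel_measurable (Fs J)" if j: "j \<in> {1..N}" for j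
    proof -
      have "w (blk Q i) j \<in> borel_measurable (stateM N d)"
        using wmeas blk_props[OF Q Suc.prems(2)] j by blast
      then show ?thesis by (rule measurable_compose[OF ax])
    qed
    have xm: "\<And>j. j \<in> {1..N} \<Longrightarrow> x n j l \<in> borel_measurable (Fs J)" using Suc.IH PJ Suc.prems(3) by auto
    have sm: "(\<lambda>\<omega>. \<Sum>j\<in>{1..N}. w (blk Q i) j (arr N d (x n) \<omega>) * x n j l \<omega>) \<in> borel_measurable (Fs J)"
      by (rule borel_measurable_sum, rule borel_measurable_times) (simp_all add: wm xm)
    note xi = Suc.IH[OF PJ Suc.prems(2,3)]
    note et = eta_meas[OF BJ(2) Suc.prems(2,3)]
    show ?thesis unfolding f_def
      by (intro borel_measurable_diff borel_measurable_times borel_measurable_const sm xi et)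
  qed
  have "(\<lambda>\<omega>. f (B n \<omega>) \<omega>) \<in> borel_measurable (Fs J)"
    by (rule measurable_compose_countable'[OF fm BmeasA[OF BJ(1)]]) (simp_all add: countable_finite bp_finite)
  moreover have eq: "\<omega> \<in> space (Fs J) \<Longrightarrow> f (B n \<omega>) \<omega> = x (Suc n) i l \<omega>" for \<omega>
    using xS[of \<omega> i l n] Suc.prems unfolding f_def by simp
  ultimately show ?case by (rule meas_cong_to)
qed

end



lemma hub_exists:
  fixes W :: "nat \<Rightarrow> real"
  assumes "finite S" "S \<noteq> {}" "card S \<le> P" "(\<Sum>c\<in>S. W c) = 1"
  shows "\<exists>h\<in>S. 1 / real P \<le> W h"
proof (rule ccontr)
  assume "\<not> ?thesis"
  then have "\<And>c. c \<in> S \<Longrightarrow> W c < 1 / real P" by auto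
  then have "(\<Sum>c\<in>S. W c) < (\<Sum>c\<in>S. 1 / real P)" by (intro sum_strict_mono assms) auto
  also have "\<dots> = real (card S) / real P" by simp
  also have "\<dots> \<le> 1"
  proof (cases "P = 0")
    case False then show ?thesis using assms(3) by (simp add: divide_le_eq_1)
  qed simp
  finally show False using assms(4) by simp
qed

context rbm begin

lemma indep_two:
  assumes "J1 \<inter> J2 = {}"
  shows "indep_sets (\<lambda>b. sigma_sets (space M) (\<Union>k\<in>(if b then J1 else J2). Egen k)) UNIV"
proof (rule indep_sets_collect_sigma)
  show "indep_sets Egen (\<Union>b\<in>UNIV. if b then J1 else J2)"
    by (rule indep_sets_mono_index[OF _ indep_all]) auto
  show "Int_stable (Egen i)" for i
    unfolding Egen_def by (cases i) (simp_all add: Int_stable_vimage Int_stable_vimage[of _ _ "count_space UNIV", simplified])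
  show "disjoint_family_on (\<lambda>b. if b then J1 else J2) UNIV"
    using assms unfolding disjoint_family_on_def by auto
qed

lemma indep_mult:
  assumes J: "J1 \<inter> J2 = {}" and f: "f \<in> borel_measurable (Fs J1)" and g: "g \<in> borel_measurable (Fs J2)"
    and f0: "\<And>\<omega>. 0 \<le> f \<omega>" and g0: "\<And>\<omega>. 0 \<le> g \<omega>"
  shows "(\<integral>\<^sup>+\<omega>. ennreal (f \<omega> * g \<omega>) \<partial>M) = (\<integral>\<^sup>+\<omega>. ennreal (f \<omega>) \<partial>M) * (\<integral>\<^sup>+\<omega>. ennreal (g \<omega>) \<partial>M)"
proof (rule indep2_nn[OF indep_two[OF J]])
  show "f \<in> borel_measurable M" by (rule measurable_from_subalg[OF subalg f])
  show "g \<in> borel_measurable M" by (rule measurable_from_subalg[OF subalg g])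
  fix A :: "real set" assume A: "A \<in> sets borel"
  show "f -` A \<inter> space M \<in> sigma_sets (space M) (\<Union>k\<in>(if True then J1 else J2). Egen k)"
    using measurable_sets[OF f A] unfolding sets_Fs by simp
  show "g -` A \<inter> space M \<in> sigma_sets (space M) (\<Union>k\<in>(if False then J1 else J2). Egen k)"
    using measurable_sets[OF g A] unfolding sets_Fs by simp
qed (use f0 g0 in auto)

definition Dl where "Dl l n \<omega> = spread N (\<lambda>i. x n i l \<omega>)"
definition el where "el l n \<omega> = (\<Sum>i\<in>{1..N}. \<bar>\<eta> n i l \<omega>\<bar>)"
definition rl where "rl l n \<omega> = Dl l n \<omega> / (1 + Dl l 0 \<omega>)"
definition Gs where "Gs n = {\<omega>\<in>space M. \<forall>k<m0. B (n+k) \<omega> = Ps (Suc k)}"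
definition \<delta> where "\<delta> = \<gamma> / real P * (1-\<gamma>)^(m0-1)"

lemma Dl_meas: "Past n \<subseteq> J \<Longrightarrow> l \<in> {1..d} \<Longrightarrow> Dl l n \<in> borel_measurable (Fs J)"
  unfolding Dl_def spread_def
  by (intro borel_measurable_diff borel_measurable_Max borel_measurable_Min finite_atLeastAtMost xmeas) auto

lemma el_meas: "Noise n \<in> J \<Longrightarrow> l \<in> {1..d} \<Longrightarrow> el l n \<in> borel_measurable (Fs J)"
  unfolding el_def
  by (intro borel_measurable_sum borel_measurable_abs eta_meas) auto

lemma rl_meas: "Past n \<subseteq> J \<Longrightarrow> l \<in> {1..d} \<Longrightarrow> rl l n \<in> borel_measurable (Fs J)"
proof -
  assume a: "Past n \<subseteq> J" "l \<in> {1..d}"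
  have "Past 0 \<subseteq> J" using a(1) by (auto simp: Past_def)
  then show ?thesis unfolding rl_def
    by (intro borel_measurable_divide borel_measurable_add borel_measurable_const Dl_meas a)
qed

lemma Dl_nonneg: "0 \<le> Dl l n \<omega>"
proof -
  have "x n 1 l \<omega> \<le> (MAX i\<in>{1..N}. x n i l \<omega>)" "(MIN i\<in>{1..N}. x n i l \<omega>) \<le> x n 1 l \<omega>"
    using N2 by auto
  then show ?thesis unfolding Dl_def spread_def by linarith
qed

lemma el_nonneg: "0 \<le> el l n \<omega>" unfolding el_def by (simp add: sum_nonneg)

lemma rl_nonneg: "0 \<le> rl l n \<omega>" unfolding rl_def using Dl_nonneg by simp

lemma rl0: "rl l 0 \<omega> \<le> 1" unfolding rl_def using Dl_nonneg[of l 0 \<omega>] by simp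

lemma G_sets: "Batch ` {n..<n+m0} \<subseteq> J \<Longrightarrow> Gs n \<in> sets (Fs J)"
proof -
  assume a: "Batch ` {n..<n+m0} \<subseteq> J"
  have "Gs n = (\<Inter>k\<in>{..<m0}. B (n+k) -` {Ps (Suc k)} \<inter> space (Fs J))"
    unfolding Gs_def using m0 by auto
  also have "\<dots> \<in> sets (Fs J)"
  proof (rule sets.finite_INT)
    fix k assume "k \<in> {..<m0}"
    then have "Batch (n+k) \<in> J" using a by auto
    then show "B (n+k) -` {Ps (Suc k)} \<inter> space (Fs J) \<in> sets (Fs J)"
      using measurable_sets[OF Bmeas] by simp
  qed (use m0 in auto)
  finally show ?thesis .
qed

definition Wt where "Wt \<omega> k i c = w (blk (B k \<omega>) i) c (arr N d (x k) \<omega>)"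

lemma dyn_path: assumes "\<omega> \<in> space M" "l \<in> {1..d}"
  shows "dyn {1..N} (\<lambda>k i. x k i l \<omega>) (Wt \<omega>) (\<lambda>k i. \<eta> k i l \<omega>) \<gamma>"
proof
  show "finite {1..N}" by simp
  show "{1..N} \<noteq> {}" using N2 by auto
  show "0 \<le> \<gamma>" "\<gamma> \<le> 1" using g0 g1 by auto
  fix k i assume i: "i \<in> {1..N}"
  note bp = blk_props[OF Bsp[OF assms(1)] i, of k]
  note wp = wprops[OF bp(1,2) arr_space[of N d "x k" \<omega>]]
  show "0 \<le> Wt \<omega> k i c" if "c \<in> {1..N}" for c using wp that unfolding Wt_def by auto
  have "(\<Sum>c\<in>{1..N}. Wt \<omega> k i c) = (\<Sum>c\<in>blk (B k \<omega>) i. Wt \<omega> k i c)"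
    by (rule sum.mono_neutral_right) (use bp wp in \<open>auto simp: Wt_def\<close>)
  then show "(\<Sum>c\<in>{1..N}. Wt \<omega> k i c) = 1" using wp unfolding Wt_def by simp
  show "x (Suc k) i l \<omega> = x k i l \<omega> - \<gamma> * (x k i l \<omega> - (\<Sum>c\<in>{1..N}. Wt \<omega> k i c * x k c l \<omega>)) -
        (x k i l \<omega> - (\<Sum>c\<in>{1..N}. Wt \<omega> k i c * x k c l \<omega>)) * \<eta> k i l \<omega>"
    using xS[OF assms(1) i assms(2)] unfolding Wt_def .
qed

lemma Dk_eq: assumes "\<omega> \<in> space M" "l \<in> {1..d}"
  shows "dyn.Dk {1..N} (\<lambda>k i. x k i l \<omega>) k = Dl l k \<omega>"
    and "dyn.eps {1..N} (\<lambda>k i. \<eta> k i l \<omega>) k = el l k \<omega>"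
  using dyn_path[OF assms] unfolding dyn.Dk_def[OF dyn_path[OF assms]] dyn.Mx_def[OF dyn_path[OF assms]]
     dyn.Mn_def[OF dyn_path[OF assms]] dyn.eps_def[OF dyn_path[OF assms]] Dl_def spread_def el_def
  by simp_all

lemma path1: assumes "\<omega> \<in> space M" "l \<in> {1..d}"
  shows "Dl l (Suc n) \<omega> \<le> Dl l n \<omega> + 2 * (el l n \<omega> * Dl l n \<omega>)"
  using dyn.spread_steps[OF dyn_path[OF assms], of n 1]
  unfolding dyn.beta_def[OF dyn_path[OF assms]] Dk_eq[OF assms] by simp

lemma path2: assumes "\<omega> \<in> space M" "l \<in> {1..d}"
  shows "Dl l (n+m0) \<omega> + \<delta> * indicator (Gs n) \<omega> * Dl l n \<omega> \<le> Dl l n \<omega> + 2 * (\<Sum>q\<in>{n..<n+m0}. el l q \<omega> * Dl l q \<omega>)"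
proof (cases "\<omega> \<in> Gs n")
  case False
  then show ?thesis using dyn.spread_steps[OF dyn_path[OF assms], of n m0]
    unfolding dyn.beta_def[OF dyn_path[OF assms]] Dk_eq[OF assms] by simp
next
  case True
  have cover: "\<forall>i\<in>{1..N}. \<forall>j\<in>{1..N}. \<exists>k\<in>{n..<n+m0}. (\<forall>c\<in>{1..N}. Wt \<omega> k i c = Wt \<omega> k j c) \<and>
      (\<exists>h\<in>{1..N}. 1 / real P \<le> Wt \<omega> k i h)"
  proof (intro ballI)
    fix i j assume i: "i \<in> {1..N}" and j: "j \<in> {1..N}"
    obtain kk S where kk: "kk \<in> {1..m0}" and S: "S \<in> Ps kk" "i \<in> S" "j \<in> S" using cov[OF i j] by blast
    define k where "k = n + (kk - 1)"
    have Bk: "B k \<omega> = Ps kk" using True kk unfolding Gs_def k_def by (auto dest: spec[of _ "kk - 1"])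
    have Q: "B k \<omega> \<in> batch_partitions N P" using Ps[OF kk] Bk by simp
    have bi: "blk (B k \<omega>) i = S" and bj: "blk (B k \<omega>) j = S"
      using blk_eq[OF Q] S Bk by auto
    note bp = blk_props[OF Q i]
    note wp = wprops[OF bp(1,2) arr_space[of N d "x k" \<omega>]]
    obtain h where h: "h \<in> blk (B k \<omega>) i" "1 / real P \<le> Wt \<omega> k i h"
      using hub_exists[OF bp(4) bp(1) bp(3), of "\<lambda>c. Wt \<omega> k i c"] wp unfolding Wt_def by auto
    show "\<exists>k\<in>{n..<n+m0}. (\<forall>c\<in>{1..N}. Wt \<omega> k i c = Wt \<omega> k j c) \<and> (\<exists>h\<in>{1..N}. 1 / real P \<le> Wt \<omega> k i h)"
    proof -
      have c1: "\<forall>c\<in>{1..N}. Wt \<omega> k i c = Wt \<omega> k j c" unfolding Wt_def using bi bj by simp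
      have c2: "\<exists>h\<in>{1..N}. 1 / real P \<le> Wt \<omega> k i h" using h bp(2) by blast
      have c3: "k \<in> {n..<n+m0}" using kk unfolding k_def by auto
      show ?thesis using c1 c2 c3 by blast
    qed
  qed
  have "Dl l (n+m0) \<omega> \<le> (1 - \<delta>) * Dl l n \<omega> + 2 * (\<Sum>q\<in>{n..<n+m0}. el l q \<omega> * Dl l q \<omega>)"
    using dyn.contraction[OF dyn_path[OF assms] cover] P2
    unfolding dyn.beta_def[OF dyn_path[OF assms]] Dk_eq[OF assms] \<delta>_def by simp
  then show ?thesis using True by (simp add: algebra_simps)
qed

end



context rbm begin

definition pG where "pG = (1 / real (card (batch_partitions N P))) ^ m0"

lemma prob_G: "prob (Gs n) = pG"
proof -
  define Ac where "Ac j = (case j of Batch k \<Rightarrow> B k -` {Ps (Suc (k - n))} \<inter> space M | _ \<Rightarrow> {})" for j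
  have "prob (\<Inter>j\<in>Batch ` {n..<n+m0}. Ac j) = (\<Prod>j\<in>Batch ` {n..<n+m0}. prob (Ac j))"
  proof (rule indep_setsD[OF indep_all])
    show "Batch ` {n..<n + m0} \<noteq> {}" using m0 by auto
    show "\<forall>j\<in>Batch ` {n..<n + m0}. Ac j \<in> Egen j"
    proof
      fix j assume "j \<in> Batch ` {n..<n + m0}"
      then obtain k where k: "j = Batch k" by auto
      have "Ac j = B k -` {Ps (Suc (k - n))} \<inter> space M" unfolding k Ac_def by simp
      moreover have "B k -` {Ps (Suc (k - n))} \<inter> space M \<in> Egen (Batch k)"
        unfolding Egen_def by (simp, rule exI[of _ "{Ps (Suc (k - n))}"], simp)
      ultimately show "Ac j \<in> Egen j" unfolding k by simp
    qed
  qed auto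
  moreover have "(\<Inter>j\<in>Batch ` {n..<n+m0}. Ac j) = Gs n"
  proof -
    have "(\<Inter>j\<in>Batch ` {n..<n+m0}. Ac j) = (\<Inter>k\<in>{n..<n+m0}. B k -` {Ps (Suc (k - n))} \<inter> space M)"
      unfolding Ac_def by simp
    also have "\<dots> = Gs n"
    proof (intro equalityI subsetI)
      fix \<omega> assume a: "\<omega> \<in> (\<Inter>k\<in>{n..<n+m0}. B k -` {Ps (Suc (k - n))} \<inter> space M)"
      have "n \<in> {n..<n+m0}" using m0 by simp
      then have "\<omega> \<in> B n -` {Ps (Suc (n - n))} \<inter> space M" by (rule INT_D[OF a])
      then have sp: "\<omega> \<in> space M" by simp
      have "B (n+k) \<omega> = Ps (Suc k)" if "k < m0" for k
      proof -
        have "n + k \<in> {n..<n+m0}" using that by simp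
        then have "\<omega> \<in> B (n+k) -` {Ps (Suc (n + k - n))} \<inter> space M" by (rule INT_D[OF a])
        then show ?thesis by simp
      qed
      then show "\<omega> \<in> Gs n" unfolding Gs_def using sp by auto
    next
      fix \<omega> assume a: "\<omega> \<in> Gs n"
      have "B k \<omega> = Ps (Suc (k - n))" if "k \<in> {n..<n+m0}" for k
      proof -
        have "k - n < m0" "n + (k - n) = k" using that by auto
        moreover have "B (n + (k - n)) \<omega> = Ps (Suc (k - n))" using a \<open>k - n < m0\<close> unfolding Gs_def by simp
        ultimately show ?thesis by simp
      qed
      moreover have "\<omega> \<in> space M" using a unfolding Gs_def by simp
      ultimately show "\<omega> \<in> (\<Inter>k\<in>{n..<n+m0}. B k -` {Ps (Suc (k - n))} \<inter> space M)"
        by blast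
    qed
    finally show ?thesis .
  qed
  moreover have "(\<Prod>j\<in>Batch ` {n..<n+m0}. prob (Ac j)) = (\<Prod>k\<in>{n..<n+m0}. prob (Ac (Batch k)))"
    by (subst prod.reindex) (auto simp: inj_on_def)
  moreover have "prob (Ac (Batch k)) = 1 / real (card (batch_partitions N P))" if "k \<in> {n..<n+m0}" for k
  proof -
    have "Suc (k - n) \<in> {1..m0}" using that by auto
    then have "Ps (Suc (k - n)) \<in> batch_partitions N P" by (rule Ps)
    moreover have "Ac (Batch k) = {\<omega>\<in>space M. B k \<omega> = Ps (Suc (k - n))}" unfolding Ac_def by auto
    ultimately show ?thesis using Bprob by simp
  qed
  ultimately show ?thesis unfolding pG_def by simp
qed

lemma pG_pos: "0 < pG"
proof -
  have "Ps 1 \<in> batch_partitions N P" using Ps m0 by auto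
  then have "card (batch_partitions N P) > 0" using bp_finite card_gt_0_iff by blast
  then show ?thesis unfolding pG_def by simp
qed

lemma pG_le1: "pG \<le> 1"
proof -
  have "Ps 1 \<in> batch_partitions N P" using Ps m0 by auto
  then have "card (batch_partitions N P) \<ge> 1" using bp_finite card_gt_0_iff
    by (metis One_nat_def Suc_leI empty_iff)
  then show ?thesis unfolding pG_def by (simp add: power_le_one)
qed

lemma E_el:
  assumes l: "l \<in> {1..d}" and z: "0 \<le> \<zeta>" "\<zeta> \<le> z2" "0 < z2"
  shows "(\<integral>\<^sup>+\<omega>. ennreal (el l n \<omega>) \<partial>M) \<le> ennreal (real N * z2)"
proof -
  define h where "h \<omega> = (\<Sum>i\<in>{1..N}. (\<eta> n i l \<omega>)\<^sup>2 / (2*z2) + z2/2)" for \<omega>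
  have pt: "el l n \<omega> \<le> h \<omega>" for \<omega>
    unfolding el_def h_def
  proof (rule sum_mono)
    fix i
    have "0 \<le> (\<bar>\<eta> n i l \<omega>\<bar> - z2)\<^sup>2" by simp
    then have "2 * z2 * \<bar>\<eta> n i l \<omega>\<bar> \<le> (\<eta> n i l \<omega>)\<^sup>2 + z2\<^sup>2"
      by (simp add: power2_eq_square algebra_simps)
    then show "\<bar>\<eta> n i l \<omega>\<bar> \<le> (\<eta> n i l \<omega>)\<^sup>2 / (2*z2) + z2/2"
      using z(3) by (simp add: field_simps power2_eq_square)
  qed
  have inti: "integrable M (\<lambda>\<omega>. (\<eta> n i l \<omega>)\<^sup>2 / (2*z2) + z2/2)" if i: "i \<in> {1..N}" for i
    by (rule Bochner_Integration.integrable_add[OF integrable_divide_zero[OF eta_int[OF i l]] integrable_const])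
  have int: "integrable M h" unfolding h_def
    by (rule Bochner_Integration.integrable_sum) (rule inti)
  have "(\<integral>\<^sup>+\<omega>. ennreal (el l n \<omega>) \<partial>M) \<le> (\<integral>\<^sup>+\<omega>. ennreal (h \<omega>) \<partial>M)"
    by (rule nn_integral_mono) (rule ennreal_leI[OF pt])
  also have "\<dots> = ennreal (\<integral>\<omega>. h \<omega> \<partial>M)"
    by (rule nn_integral_eq_integral[OF int]) (rule AE_I2, metis pt el_nonneg order_trans)
  also have "(\<integral>\<omega>. h \<omega> \<partial>M) = (\<Sum>i\<in>{1..N}. (\<integral>\<omega>. (\<eta> n i l \<omega>)\<^sup>2 \<partial>M) / (2*z2) + z2/2)"
  proof -
    have ii: "(\<integral>\<omega>. (\<eta> n i l \<omega>)\<^sup>2 / (2*z2) + z2/2 \<partial>M) = (\<integral>\<omega>. (\<eta> n i l \<omega>)\<^sup>2 \<partial>M) / (2*z2) + z2/2"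
      if i: "i \<in> {1..N}" for i
      by (subst Bochner_Integration.integral_add) (simp_all add: eta_int[OF i l] prob_space)
    show ?thesis unfolding h_def
      by (subst Bochner_Integration.integral_sum[OF inti]) (simp_all add: ii)
  qed
  also have "\<dots> \<le> (\<Sum>i\<in>{1..N}. z2)"
  proof (rule sum_mono)
    fix i assume i: "i \<in> {1..N}"
    have "(\<integral>\<omega>. (\<eta> n i l \<omega>)\<^sup>2 \<partial>M) \<le> z2\<^sup>2"
      using eta_mom[OF i l, of n] power_mono[OF z(2) z(1), of 2] by linarith
    then have "(\<integral>\<omega>. (\<eta> n i l \<omega>)\<^sup>2 \<partial>M) / (2*z2) \<le> z2\<^sup>2 / (2*z2)"
      using z(3) by (intro divide_right_mono) auto
    also have "z2\<^sup>2 / (2*z2) = z2/2" using z(3) by (simp add: power2_eq_square)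
    finally show "(\<integral>\<omega>. (\<eta> n i l \<omega>)\<^sup>2 \<partial>M) / (2*z2) + z2/2 \<le> z2" by simp
  qed
  also have "\<dots> = real N * z2" by simp
  finally show ?thesis by (simp add: ennreal_leI)
qed

end



context rbm begin

definition al where "al l n = (\<integral>\<^sup>+\<omega>. ennreal (rl l n \<omega>) \<partial>M)"

lemma rlM: "l \<in> {1..d} \<Longrightarrow> rl l n \<in> borel_measurable M"
  by (rule measurable_from_subalg[OF subalg rl_meas[of n UNIV]]) auto

lemma elM: "l \<in> {1..d} \<Longrightarrow> el l n \<in> borel_measurable M"
  by (rule measurable_from_subalg[OF subalg el_meas[of n UNIV]]) auto

lemma DlM: "l \<in> {1..d} \<Longrightarrow> Dl l n \<in> borel_measurable M"
  by (rule measurable_from_subalg[OF subalg Dl_meas[of n UNIV]]) auto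

lemma GM: "Gs n \<in> sets M"
  using G_sets[of n UNIV] subalg unfolding subalgebra_def by auto

lemma ennM: "f \<in> borel_measurable M \<Longrightarrow> (\<lambda>\<omega>. ennreal (f \<omega>)) \<in> borel_measurable M"
  by (rule measurable_compose[OF _ measurable_ennreal])

lemma rpath1: assumes "\<omega> \<in> space M" "l \<in> {1..d}"
  shows "rl l (Suc n) \<omega> \<le> rl l n \<omega> + 2 * (el l n \<omega> * rl l n \<omega>)"
proof -
  have c: "0 < 1 + Dl l 0 \<omega>" using Dl_nonneg[of l 0 \<omega>] by simp
  have "rl l (Suc n) \<omega> \<le> (Dl l n \<omega> + 2 * (el l n \<omega> * Dl l n \<omega>)) / (1 + Dl l 0 \<omega>)"
    unfolding rl_def using path1[OF assms, of n] c by (intro divide_right_mono) auto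
  also have "\<dots> = rl l n \<omega> + 2 * (el l n \<omega> * rl l n \<omega>)"
    unfolding rl_def by (simp add: add_divide_distrib)
  finally show ?thesis .
qed

lemma rpath2: assumes "\<omega> \<in> space M" "l \<in> {1..d}"
  shows "rl l (n+m0) \<omega> + \<delta> * (indicator (Gs n) \<omega> * rl l n \<omega>) \<le> rl l n \<omega> + 2 * (\<Sum>q\<in>{n..<n+m0}. el l q \<omega> * rl l q \<omega>)"
proof -
  have c: "0 < 1 + Dl l 0 \<omega>" using Dl_nonneg[of l 0 \<omega>] by simp
  have "rl l (n+m0) \<omega> + \<delta> * (indicator (Gs n) \<omega> * rl l n \<omega>) =
      (Dl l (n+m0) \<omega> + \<delta> * indicator (Gs n) \<omega> * Dl l n \<omega>) / (1 + Dl l 0 \<omega>)"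
    unfolding rl_def by (simp add: add_divide_distrib)
  also have "\<dots> \<le> (Dl l n \<omega> + 2 * (\<Sum>q\<in>{n..<n+m0}. el l q \<omega> * Dl l q \<omega>)) / (1 + Dl l 0 \<omega>)"
    using path2[OF assms, of n] c by (intro divide_right_mono) auto
  also have "\<dots> = rl l n \<omega> + 2 * (\<Sum>q\<in>{n..<n+m0}. el l q \<omega> * rl l q \<omega>)"
    unfolding rl_def by (simp add: add_divide_distrib sum_divide_distrib[symmetric])
  finally show ?thesis .
qed

lemma Past_Noise: "Noise n \<notin> Past n" unfolding Past_def by auto

lemma E_prod: assumes l: "l \<in> {1..d}"
  shows "(\<integral>\<^sup>+\<omega>. ennreal (el l n \<omega> * rl l n \<omega>) \<partial>M) = (\<integral>\<^sup>+\<omega>. ennreal (el l n \<omega>) \<partial>M) * al l n"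
  unfolding al_def
  by (rule indep_mult[of "{Noise n}" "Past n"]) (use Past_Noise el_meas rl_meas l el_nonneg rl_nonneg in auto)

lemma E_G: assumes l: "l \<in> {1..d}"
  shows "(\<integral>\<^sup>+\<omega>. ennreal (indicator (Gs n) \<omega> * rl l n \<omega>) \<partial>M) = ennreal pG * al l n"
proof -
  have "(\<integral>\<^sup>+\<omega>. ennreal (indicator (Gs n) \<omega> * rl l n \<omega>) \<partial>M) = (\<integral>\<^sup>+\<omega>. ennreal (indicator (Gs n) \<omega>) \<partial>M) * al l n"
    unfolding al_def
  proof (rule indep_mult[of "Batch ` {n..<n+m0}" "Past n"])
    show "Batch ` {n..<n + m0} \<inter> Past n = {}" unfolding Past_def by auto
    show "indicator (Gs n) \<in> borel_measurable (Fs (Batch ` {n..<n + m0}))"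
      by (rule borel_measurable_indicator[OF G_sets]) simp
    show "rl l n \<in> borel_measurable (Fs (Past n))" by (rule rl_meas) (use l in auto)
  qed (auto simp: rl_nonneg)
  also have "(\<integral>\<^sup>+\<omega>. ennreal (indicator (Gs n) \<omega>) \<partial>M) = ennreal pG"
    using GM prob_G[of n] by (simp add: ennreal_indicator emeasure_eq_measure)
  finally show ?thesis .
qed

lemma A1: assumes l: "l \<in> {1..d}" and z: "0 \<le> \<zeta>" "\<zeta> \<le> z2" "0 < z2"
  shows "al l (Suc n) \<le> (1 + 2 * ennreal (real N * z2)) * al l n"
proof -
  have "al l (Suc n) \<le> (\<integral>\<^sup>+\<omega>. ennreal (rl l n \<omega> + 2 * (el l n \<omega> * rl l n \<omega>)) \<partial>M)"
    unfolding al_def by (rule nn_integral_mono) (rule ennreal_leI[OF rpath1[OF _ l]])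
  also have "\<dots> = (\<integral>\<^sup>+\<omega>. ennreal (rl l n \<omega>) + 2 * ennreal (el l n \<omega> * rl l n \<omega>) \<partial>M)"
    by (rule nn_integral_cong) (simp add: rl_nonneg el_nonneg ennreal_mult)
  also have "\<dots> = al l n + 2 * (\<integral>\<^sup>+\<omega>. ennreal (el l n \<omega> * rl l n \<omega>) \<partial>M)"
  proof -
    have m1: "(\<lambda>\<omega>. ennreal (rl l n \<omega>)) \<in> borel_measurable M" by (intro ennM rlM l)
    have m3: "(\<lambda>\<omega>. ennreal (el l n \<omega> * rl l n \<omega>)) \<in> borel_measurable M"
      by (intro ennM borel_measurable_times rlM elM l)
    have m4: "(\<lambda>\<omega>. 2 * ennreal (el l n \<omega> * rl l n \<omega>)) \<in> borel_measurable M"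
      by (intro borel_measurable_times_ennreal m3 borel_measurable_const)
    show ?thesis unfolding al_def nn_integral_add[OF m1 m4] nn_integral_cmult[OF m3] ..
  qed
  also have "\<dots> \<le> al l n + 2 * (ennreal (real N * z2) * al l n)"
    unfolding E_prod[OF l] by (intro add_left_mono mult_left_mono mult_right_mono E_el[OF l z]) auto
  also have "\<dots> = (1 + 2 * ennreal (real N * z2)) * al l n" by (simp add: algebra_simps)
  finally show ?thesis .
qed

lemma A2: assumes l: "l \<in> {1..d}" and z: "0 \<le> \<zeta>" "\<zeta> \<le> z2" "0 < z2"
  shows "al l (n+m0) + ennreal \<delta> * (ennreal pG * al l n) \<le> al l n + 2 * (ennreal (real N * z2) * (\<Sum>q\<in>{n..<n+m0}. al l q))"
proof -
  have d0: "0 \<le> \<delta>" unfolding \<delta>_def using g0 g1 by auto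
  have m1: "(\<lambda>\<omega>. ennreal (rl l k \<omega>)) \<in> borel_measurable M" for k by (intro ennM rlM l)
  have m2: "(\<lambda>\<omega>. ennreal (indicator (Gs n) \<omega> * rl l n \<omega>)) \<in> borel_measurable M"
    by (intro ennM borel_measurable_times rlM l borel_measurable_indicator GM)
  have m3: "(\<lambda>\<omega>. ennreal (el l q \<omega> * rl l q \<omega>)) \<in> borel_measurable M" for q
    by (intro ennM borel_measurable_times rlM elM l)
  have "al l (n+m0) + ennreal \<delta> * (ennreal pG * al l n) =
      (\<integral>\<^sup>+\<omega>. ennreal (rl l (n+m0) \<omega>) + ennreal \<delta> * ennreal (indicator (Gs n) \<omega> * rl l n \<omega>) \<partial>M)"
  proof -
    have m4: "(\<lambda>\<omega>. ennreal \<delta> * ennreal (indicator (Gs n) \<omega> * rl l n \<omega>)) \<in> borel_measurable M"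
      by (intro borel_measurable_times_ennreal m2 borel_measurable_const)
    show ?thesis unfolding nn_integral_add[OF m1 m4] nn_integral_cmult[OF m2] E_G[OF l] al_def ..
  qed
  also have "\<dots> = (\<integral>\<^sup>+\<omega>. ennreal (rl l (n+m0) \<omega> + \<delta> * (indicator (Gs n) \<omega> * rl l n \<omega>)) \<partial>M)"
    by (rule nn_integral_cong) (simp add: rl_nonneg d0 ennreal_mult)
  also have "\<dots> \<le> (\<integral>\<^sup>+\<omega>. ennreal (rl l n \<omega> + 2 * (\<Sum>q\<in>{n..<n+m0}. el l q \<omega> * rl l q \<omega>)) \<partial>M)"
    by (rule nn_integral_mono) (rule ennreal_leI[OF rpath2[OF _ l]])
  also have "\<dots> = (\<integral>\<^sup>+\<omega>. ennreal (rl l n \<omega>) + 2 * (\<Sum>q\<in>{n..<n+m0}. ennreal (el l q \<omega> * rl l q \<omega>)) \<partial>M)"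
  proof (rule nn_integral_cong)
    fix \<omega>
    have S0: "0 \<le> (\<Sum>q\<in>{n..<n+m0}. el l q \<omega> * rl l q \<omega>)" by (intro sum_nonneg) (simp add: el_nonneg rl_nonneg)
    have "ennreal (rl l n \<omega> + 2 * (\<Sum>q\<in>{n..<n+m0}. el l q \<omega> * rl l q \<omega>)) =
        ennreal (rl l n \<omega>) + 2 * ennreal (\<Sum>q\<in>{n..<n+m0}. el l q \<omega> * rl l q \<omega>)"
      using S0 rl_nonneg[of l n \<omega>] by (simp add: ennreal_mult'')
    also have "ennreal (\<Sum>q\<in>{n..<n+m0}. el l q \<omega> * rl l q \<omega>) = (\<Sum>q\<in>{n..<n+m0}. ennreal (el l q \<omega> * rl l q \<omega>))"
      by (rule sum_ennreal[symmetric]) (simp add: el_nonneg rl_nonneg)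
    finally show "ennreal (rl l n \<omega> + 2 * (\<Sum>q\<in>{n..<n+m0}. el l q \<omega> * rl l q \<omega>)) =
        ennreal (rl l n \<omega>) + 2 * (\<Sum>q\<in>{n..<n+m0}. ennreal (el l q \<omega> * rl l q \<omega>))" .
  qed
  also have "\<dots> = al l n + 2 * (\<Sum>q\<in>{n..<n+m0}. (\<integral>\<^sup>+\<omega>. ennreal (el l q \<omega> * rl l q \<omega>) \<partial>M))"
  proof -
    have m5: "(\<lambda>\<omega>. \<Sum>q\<in>{n..<n+m0}. ennreal (el l q \<omega> * rl l q \<omega>)) \<in> borel_measurable M"
      by (intro borel_measurable_sum m3)
    have m4: "(\<lambda>\<omega>. 2 * (\<Sum>q\<in>{n..<n+m0}. ennreal (el l q \<omega> * rl l q \<omega>))) \<in> borel_measurable M"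
      by (intro borel_measurable_times_ennreal m5 borel_measurable_const)
    show ?thesis unfolding al_def nn_integral_add[OF m1 m4] nn_integral_cmult[OF m5] nn_integral_sum[OF m3] ..
  qed
  also have "\<dots> \<le> al l n + 2 * (\<Sum>q\<in>{n..<n+m0}. ennreal (real N * z2) * al l q)"
    unfolding E_prod[OF l]
    by (intro add_left_mono mult_left_mono sum_mono mult_right_mono E_el[OF l z]) auto
  also have "\<dots> = al l n + 2 * (ennreal (real N * z2) * (\<Sum>q\<in>{n..<n+m0}. al l q))"
    by (simp add: sum_distrib_left)
  finally show ?thesis .
qed

end



context rbm begin

definition z2 where "z2 = \<delta> * pG / (4 * real N * real m0 * 2^m0)"
definition \<kappa> where "\<kappa> = \<delta> * pG / (4 * real m0 * 2^m0)"
definition \<rho> where "\<rho> = 1 - \<delta> * pG / 2"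
definition \<Lambda> where "\<Lambda> = - ln \<rho> / (2 * real m0)"

lemma delta_pos: "0 < \<delta>" and delta_le: "\<delta> \<le> 1"
proof -
  have "(1-\<gamma>)^(m0-1) \<le> 1" "0 < (1-\<gamma>)^(m0-1)" using g0 g1 by (auto intro: power_le_one)
  moreover have "\<gamma> / real P \<le> 1" "0 < \<gamma> / real P" using g0 g1 P2 by auto
  ultimately show "0 < \<delta>" "\<delta> \<le> 1" unfolding \<delta>_def
    using mult_pos_pos[of "\<gamma> / real P" "(1-\<gamma>)^(m0-1)"] mult_le_one[of "\<gamma> / real P" "(1-\<gamma>)^(m0-1)"]
    by auto
qed

lemma dp: "0 < \<delta> * pG" "\<delta> * pG \<le> 1"
  using delta_pos delta_le pG_pos pG_le1 by (auto intro: mult_le_one)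

lemma z2_pos: "0 < z2" unfolding z2_def using dp m0 N2 by auto

lemma kappa: "real N * z2 = \<kappa>" unfolding z2_def \<kappa>_def using N2 by (simp add: field_simps)

lemma kappa_pos: "0 < \<kappa>" unfolding \<kappa>_def using dp m0 by auto

lemma kappa_le: "2 * \<kappa> \<le> 1"
proof -
  have "1 * 1 \<le> real m0 * 2^m0" by (rule mult_mono) (use m0 in auto)
  then have D: "2 \<le> 4 * real m0 * 2^m0" by simp
  have E: "\<kappa> * (4 * real m0 * 2^m0) = \<delta> * pG" unfolding \<kappa>_def using D m0 by simp
  have "\<kappa> * 2 \<le> \<kappa> * (4 * real m0 * 2^m0)" by (rule mult_left_mono[OF D]) (use kappa_pos in auto)
  then show ?thesis using E dp by linarith
qed

lemma rho: "0 < \<rho>" "\<rho> < 1" unfolding \<rho>_def using dp by auto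

lemma Lambda_pos: "0 < \<Lambda>"
proof -
  have "ln \<rho> < 0" using rho by (simp add: ln_less_zero)
  moreover have "0 < 2 * real m0" using m0 by simp
  ultimately have "ln \<rho> / (2 * real m0) < 0" by (rule divide_neg_pos)
  then show ?thesis unfolding \<Lambda>_def by simp
qed

context fixes l assumes l: "l \<in> {1..d}" and zz: "0 \<le> \<zeta>" "\<zeta> < z2"
begin

lemma zz': "0 \<le> \<zeta>" "\<zeta> \<le> z2" "0 < z2" using zz z2_pos by auto

lemma al0: "al l 0 \<le> 1"
proof -
  have "al l 0 \<le> (\<integral>\<^sup>+\<omega>. 1 \<partial>M)" unfolding al_def
    by (rule nn_integral_mono) (simp add: rl0)
  then show ?thesis by (simp add: emeasure_space_1)
qed

lemma al_fin: "al l n < \<top>"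
proof (induction n)
  case 0 then show ?case using al0 by (simp add: le_less_trans)
next
  case (Suc n)
  have "al l (Suc n) \<le> (1 + 2 * ennreal (real N * z2)) * al l n" by (rule A1[OF l zz'])
  also have "\<dots> < \<top>" using Suc by (simp add: ennreal_mult_less_top)
  finally show ?case .
qed

definition \<alpha> where "\<alpha> n = enn2real (al l n)"

lemma al_eq: "al l n = ennreal (\<alpha> n)"
  unfolding \<alpha>_def using al_fin[of n] by (simp add: ennreal_enn2real_if)

lemma alpha_nonneg: "0 \<le> \<alpha> n" unfolding \<alpha>_def by simp

lemma R1: "\<alpha> (Suc n) \<le> (1 + 2 * \<kappa>) * \<alpha> n"
proof -
  have "ennreal (\<alpha> (Suc n)) \<le> (1 + 2 * ennreal \<kappa>) * ennreal (\<alpha> n)"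
    using A1[OF l zz', of n] unfolding al_eq kappa .
  also have "\<dots> = ennreal ((1 + 2 * \<kappa>) * \<alpha> n)"
    using kappa_pos alpha_nonneg[of n] by (simp add: ennreal_mult'' ennreal_plus)
  finally show ?thesis using kappa_pos alpha_nonneg[of n] by (simp add: ennreal_le_iff)
qed

lemma R2: "\<alpha> (n+m0) + \<delta> * (pG * \<alpha> n) \<le> \<alpha> n + 2 * (\<kappa> * (\<Sum>q\<in>{n..<n+m0}. \<alpha> q))"
proof -
  have s0: "0 \<le> (\<Sum>q\<in>{n..<n+m0}. \<alpha> q)" by (simp add: sum_nonneg alpha_nonneg)
  have "ennreal (\<alpha> (n+m0) + \<delta> * (pG * \<alpha> n)) = al l (n+m0) + ennreal \<delta> * (ennreal pG * al l n)"
    using delta_pos pG_pos alpha_nonneg[of n] alpha_nonneg[of "n+m0"]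
    by (simp add: al_eq ennreal_mult'' ennreal_plus)
  also have "\<dots> \<le> al l n + 2 * (ennreal (real N * z2) * (\<Sum>q\<in>{n..<n+m0}. al l q))"
    by (rule A2[OF l zz'])
  also have "\<dots> = ennreal (\<alpha> n + 2 * (\<kappa> * (\<Sum>q\<in>{n..<n+m0}. \<alpha> q)))"
    using kappa_pos alpha_nonneg[of n] s0
    by (simp add: al_eq kappa ennreal_mult'' ennreal_plus sum_ennreal alpha_nonneg)
  finally have "ennreal (\<alpha> (n+m0) + \<delta> * (pG * \<alpha> n)) \<le> ennreal (\<alpha> n + 2 * (\<kappa> * (\<Sum>q\<in>{n..<n+m0}. \<alpha> q)))" .
  moreover have "0 \<le> \<alpha> n + 2 * (\<kappa> * (\<Sum>q\<in>{n..<n+m0}. \<alpha> q))" using kappa_pos alpha_nonneg[of n] s0 by simp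
  ultimately show ?thesis using ennreal_le_iff by blast
qed

lemma R1k: "\<alpha> (n+k) \<le> (1 + 2 * \<kappa>)^k * \<alpha> n"
proof (induction k)
  case (Suc k)
  have "\<alpha> (n + Suc k) \<le> (1 + 2 * \<kappa>) * \<alpha> (n+k)" using R1[of "n+k"] by simp
  also have "\<dots> \<le> (1 + 2 * \<kappa>) * ((1 + 2 * \<kappa>)^k * \<alpha> n)"
    using Suc kappa_pos by (intro mult_left_mono) auto
  finally show ?case by (simp add: algebra_simps)
qed simp

lemma pw: "k \<le> m0 \<Longrightarrow> (1 + 2 * \<kappa>)^k \<le> 2^m0"
proof -
  assume k: "k \<le> m0"
  have "(1 + 2 * \<kappa>)^k \<le> 2^k" using kappa_le kappa_pos by (intro power_mono) auto
  also have "(2::real)^k \<le> 2^m0" using k by (intro power_increasing) auto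
  finally show ?thesis .
qed

lemma R3: "\<alpha> (n+m0) \<le> \<rho> * \<alpha> n"
proof -
  have "(\<Sum>q\<in>{n..<n+m0}. \<alpha> q) \<le> (\<Sum>q\<in>{n..<n+m0}. 2^m0 * \<alpha> n)"
  proof (rule sum_mono)
    fix q assume q: "q \<in> {n..<n+m0}"
    then have "\<alpha> q = \<alpha> (n + (q - n))" by simp
    also have "\<dots> \<le> (1 + 2 * \<kappa>)^(q-n) * \<alpha> n" by (rule R1k)
    also have "\<dots> \<le> 2^m0 * \<alpha> n" using q by (intro mult_right_mono pw alpha_nonneg) auto
    finally show "\<alpha> q \<le> 2^m0 * \<alpha> n" .
  qed
  also have "\<dots> = real m0 * 2^m0 * \<alpha> n" by simp
  finally have "2 * (\<kappa> * (\<Sum>q\<in>{n..<n+m0}. \<alpha> q)) \<le> 2 * (\<kappa> * (real m0 * 2^m0 * \<alpha> n))"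
    using kappa_pos by (intro mult_left_mono) auto
  also have "2 * (\<kappa> * (real m0 * 2^m0 * \<alpha> n)) = \<delta> * pG / 2 * \<alpha> n"
    unfolding \<kappa>_def using m0 by (simp add: field_simps)
  finally have "2 * (\<kappa> * (\<Sum>q\<in>{n..<n+m0}. \<alpha> q)) \<le> \<delta> * pG / 2 * \<alpha> n" .
  then show ?thesis using R2[of n] unfolding \<rho>_def by (simp add: algebra_simps)
qed

definition K where "K = 2^m0 / \<rho>"

lemma alpha_bound: "\<alpha> n \<le> K * exp (real n * ln \<rho> / real m0)"
proof (induction n rule: less_induct)
  case (less n)
  show ?case
  proof (cases "n < m0")
    case True
    have "\<alpha> n = \<alpha> (0 + n)" by simp
    also have "\<dots> \<le> (1 + 2 * \<kappa>)^n * \<alpha> 0" by (rule R1k)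
    also have "\<dots> \<le> 2^m0 * 1"
      using pw[of n] True al0 alpha_nonneg[of 0] kappa_pos
      by (intro mult_mono) (auto simp: al_eq)
    also have "\<dots> = K * exp (ln \<rho>)" unfolding K_def using rho by simp
    also have "\<dots> \<le> K * exp (real n * ln \<rho> / real m0)"
    proof -
      have ln0: "ln \<rho> < 0" using rho by (simp add: ln_less_zero)
      have "real n / real m0 \<le> 1" using True by simp
      then have "1 * ln \<rho> \<le> (real n / real m0) * ln \<rho>" by (rule mult_right_mono_neg) (use ln0 in auto)
      then have "ln \<rho> \<le> real n * ln \<rho> / real m0" by simp
      then have "exp (ln \<rho>) \<le> exp (real n * ln \<rho> / real m0)" by simp
      moreover have "0 \<le> K" unfolding K_def using rho by simp
      ultimately show ?thesis by (rule mult_left_mono)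
    qed
    finally show ?thesis .
  next
    case False
    define n' where "n' = n - m0"
    have nn: "n = n' + m0" using False unfolding n'_def by simp
    have "\<alpha> n \<le> \<rho> * \<alpha> n'" unfolding nn by (rule R3)
    also have "\<dots> \<le> \<rho> * (K * exp (real n' * ln \<rho> / real m0))"
      using less.IH[of n'] m0 rho unfolding nn by (intro mult_left_mono) auto
    also have "\<dots> = K * exp (real n * ln \<rho> / real m0)"
    proof -
      have "real n * ln \<rho> / real m0 = real n' * ln \<rho> / real m0 + ln \<rho>"
        unfolding nn using m0 by (simp add: field_simps)
      then show ?thesis using rho by (simp add: exp_add)
    qed
    finally show ?thesis .
  qed
qed

definition q where "q = exp (ln \<rho> / (2 * real m0))"

lemma q: "0 < q" "q < 1"
proof -
  have "ln \<rho> < 0" using rho by (simp add: ln_less_zero)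
  moreover have "0 < 2 * real m0" using m0 by simp
  ultimately have "ln \<rho> / (2 * real m0) < 0" by (rule divide_neg_pos)
  then show "0 < q" "q < 1" unfolding q_def by auto
qed

lemma alpha_exp: "\<alpha> n * exp (\<Lambda> * real n) \<le> K * q ^ n"
proof -
  have "\<alpha> n * exp (\<Lambda> * real n) \<le> K * exp (real n * ln \<rho> / real m0) * exp (\<Lambda> * real n)"
    by (intro mult_right_mono alpha_bound) auto
  also have "\<dots> = K * exp (real n * (ln \<rho> / (2 * real m0)))"
    unfolding \<Lambda>_def using m0 by (simp add: mult.assoc exp_add[symmetric] field_simps)
  also have "\<dots> = K * q ^ n" unfolding q_def by (simp only: exp_of_nat_mult)
  finally show ?thesis .
qed

lemma coord:
  shows "\<exists>C. C \<in> borel_measurable M \<and> (\<forall>\<omega>\<in>space M. 0 < C \<omega>) \<and>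
     (AE \<omega> in M. \<forall>n. Dl l n \<omega> \<le> C \<omega> * exp (- \<Lambda> * real n))"
proof -
  define f where "f n \<omega> = ennreal (rl l n \<omega> * exp (\<Lambda> * real n))" for n \<omega>
  define S where "S \<omega> = (\<Sum>n. f n \<omega>)" for \<omega>
  have fm: "f n \<in> borel_measurable M" for n unfolding f_def
    by (intro ennM borel_measurable_times rlM l borel_measurable_const)
  have Sm: "S \<in> borel_measurable M" unfolding S_def by (rule borel_measurable_suminf_order[OF fm])
  have fi: "integral\<^sup>N M (f n) = ennreal (\<alpha> n * exp (\<Lambda> * real n))" for n
  proof -
    have "integral\<^sup>N M (f n) = (\<integral>\<^sup>+\<omega>. ennreal (rl l n \<omega>) * ennreal (exp (\<Lambda> * real n)) \<partial>M)"
      unfolding f_def by (rule nn_integral_cong) (simp add: rl_nonneg ennreal_mult)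
    also have "\<dots> = al l n * ennreal (exp (\<Lambda> * real n))"
      unfolding al_def by (rule nn_integral_multc) (intro ennM rlM l)
    also have "\<dots> = ennreal (\<alpha> n * exp (\<Lambda> * real n))"
      using al_eq[of n] alpha_nonneg[of n] by (simp add: ennreal_mult)
    finally show ?thesis .
  qed
  have "integral\<^sup>N M S = (\<Sum>n. integral\<^sup>N M (f n))" unfolding S_def by (rule nn_integral_suminf[OF fm])
  also have "\<dots> \<le> (\<Sum>n. ennreal (K * q ^ n))"
    unfolding fi by (rule suminf_le) (auto intro: ennreal_leI alpha_exp)
  finally have Sfin: "integral\<^sup>N M S \<noteq> \<top>"
  proof -
    assume le: "integral\<^sup>N M S \<le> (\<Sum>n. ennreal (K * q ^ n))"
    have K0: "0 \<le> K" unfolding K_def using rho by simp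
    have "summable (\<lambda>n. K * q ^ n)"
      by (rule summable_mult, rule summable_geometric) (use q in auto)
    then have "(\<Sum>n. ennreal (K * q ^ n)) \<noteq> \<top>"
      by (rule ennreal_suminf_neq_top) (use K0 q in auto)
    then show ?thesis using le by (metis top.extremum_uniqueI)
  qed
  have AEf: "AE \<omega> in M. S \<omega> \<noteq> \<top>"
    using nn_integral_PInf_AE[OF Sm] Sfin by (simp add: infinity_ennreal_def)
  define C where "C \<omega> = (1 + Dl l 0 \<omega>) * enn2real (S \<omega>) + 1" for \<omega>
  have Cm: "C \<in> borel_measurable M" unfolding C_def
    by (intro borel_measurable_add borel_measurable_times borel_measurable_const DlM l borel_measurable_enn2real Sm)
  have Cpos: "\<forall>\<omega>\<in>space M. 0 < C \<omega>"
  proof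
    fix \<omega>
    have "0 \<le> (1 + Dl l 0 \<omega>) * enn2real (S \<omega>)"
      using Dl_nonneg[of l 0 \<omega>] by (intro mult_nonneg_nonneg) auto
    then show "0 < C \<omega>" unfolding C_def by linarith
  qed
  have "AE \<omega> in M. \<forall>n. Dl l n \<omega> \<le> C \<omega> * exp (- \<Lambda> * real n)"
    using AEf
  proof (rule AE_mp, intro AE_I2 impI allI)
    fix \<omega> n assume Sf: "S \<omega> \<noteq> \<top>"
    have "f n \<omega> \<le> S \<omega>" unfolding S_def
      using sum_le_suminf[OF summableI, of "{n}" "\<lambda>n. f n \<omega>"] by simp
    then have "enn2real (f n \<omega>) \<le> enn2real (S \<omega>)" using Sf by (intro enn2real_mono) (auto simp: top.not_eq_extremum)
    then have le1: "rl l n \<omega> * exp (\<Lambda> * real n) \<le> enn2real (S \<omega>)" unfolding f_def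
      using rl_nonneg[of l n \<omega>] by simp
    have "rl l n \<omega> = rl l n \<omega> * exp (\<Lambda> * real n) * exp (- \<Lambda> * real n)"
      by (simp add: mult.assoc exp_add[symmetric])
    also have "\<dots> \<le> enn2real (S \<omega>) * exp (- \<Lambda> * real n)"
      by (rule mult_right_mono[OF le1]) simp
    finally have le2: "rl l n \<omega> \<le> enn2real (S \<omega>) * exp (- \<Lambda> * real n)" .
    have c: "0 < 1 + Dl l 0 \<omega>" using Dl_nonneg[of l 0 \<omega>] by simp
    have "Dl l n \<omega> = (1 + Dl l 0 \<omega>) * rl l n \<omega>" unfolding rl_def using c by simp
    also have "\<dots> \<le> (1 + Dl l 0 \<omega>) * (enn2real (S \<omega>) * exp (- \<Lambda> * real n))"
      using c le2 by (intro mult_left_mono) auto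
    also have "\<dots> \<le> C \<omega> * exp (- \<Lambda> * real n)" unfolding C_def by (simp add: algebra_simps)
    finally show "Dl l n \<omega> \<le> C \<omega> * exp (- \<Lambda> * real n)" .
  qed
  then show ?thesis using Cm Cpos by blast
qed

end
end


lemma spread_abs:
  assumes "i \<in> {1..N}" "j \<in> {1..N}"
  shows "\<bar>f i - f j\<bar> \<le> spread N f"
proof -
  have "f i \<le> (MAX k\<in>{1..N}. f k)" "f j \<le> (MAX k\<in>{1..N}. f k)"
    "(MIN k\<in>{1..N}. f k) \<le> f i" "(MIN k\<in>{1..N}. f k) \<le> f j" using assms by auto
  then show ?thesis unfolding spread_def by linarith
qed

theorem theorem4p2:
  fixes N P m0 :: nat and \<gamma> :: real
  assumes "N \<ge> 2" and "P \<ge> 2" and "0 < \<gamma>" and "\<gamma> < 1"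
    and "covering_property N P m0"
  shows "\<exists>\<zeta>2 > 0. \<forall>\<zeta>. 0 \<le> \<zeta> \<and> \<zeta> < \<zeta>2 \<longrightarrow>
     (\<exists>\<Lambda>2 > 0. \<forall>(d::nat) w (M::'a measure) B \<eta> X0 x.
        d \<ge> 1 \<and> rbcbo_model N P \<gamma> \<zeta> d w M B \<eta> X0 x \<longrightarrow>
        (\<exists>C :: nat \<Rightarrow> 'a \<Rightarrow> real.
           (\<forall>l\<in>{1..d}. C l \<in> borel_measurable M \<and> (\<forall>\<omega>\<in>space M. 0 < C l \<omega>)) \<and>
           (AE \<omega> in M. \<forall>n::nat.
              (\<forall>l\<in>{1..d}. spread N (\<lambda>i. x n i l \<omega>) \<le> C l \<omega> * exp (- \<Lambda>2 * real n)) \<and>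
              (MAX (i, j)\<in>{1..N} \<times> {1..N}. MAX l\<in>{1..d}. \<bar>x n i l \<omega> - x n j l \<omega>\<bar>)
                 \<le> (MAX l\<in>{1..d}. C l \<omega>) * exp (- \<Lambda>2 * real n))))"
proof -
  obtain Ps where m0: "0 < m0" and Ps: "\<And>k. k \<in> {1..m0} \<Longrightarrow> Ps k \<in> batch_partitions N P"
    and cov: "\<And>i j. i \<in> {1..N} \<Longrightarrow> j \<in> {1..N} \<Longrightarrow> \<exists>k\<in>{1..m0}. \<exists>S\<in>Ps k. i \<in> S \<and> j \<in> S"
    using assms(5) unfolding covering_property_def by blast
  define \<delta>0 where "\<delta>0 = \<gamma> / real P * (1 - \<gamma>) ^ (m0 - 1)"
  define p0 where "p0 = (1 / real (card (batch_partitions N P))) ^ m0"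
  define \<zeta>2 where "\<zeta>2 = \<delta>0 * p0 / (4 * real N * real m0 * 2^m0)"
  define \<Lambda>2 where "\<Lambda>2 = - ln (1 - \<delta>0 * p0 / 2) / (2 * real m0)"
  have d0: "0 < \<delta>0" "\<delta>0 \<le> 1"
  proof -
    have "(1-\<gamma>)^(m0-1) \<le> 1" "0 < (1-\<gamma>)^(m0-1)" using assms(3,4) by (auto intro: power_le_one)
    moreover have "\<gamma> / real P \<le> 1" "0 < \<gamma> / real P" using assms(2,3,4) by auto
    ultimately show "0 < \<delta>0" "\<delta>0 \<le> 1" unfolding \<delta>0_def
      using mult_pos_pos[of "\<gamma> / real P" "(1-\<gamma>)^(m0-1)"] mult_le_one[of "\<gamma> / real P" "(1-\<gamma>)^(m0-1)"]
      by auto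
  qed
  have p0: "0 < p0" "p0 \<le> 1"
  proof -
    have "Ps 1 \<in> batch_partitions N P" using Ps m0 by auto
    then have "card (batch_partitions N P) \<ge> 1" using bp_finite card_gt_0_iff
      by (metis One_nat_def Suc_leI empty_iff)
    then show "0 < p0" "p0 \<le> 1" unfolding p0_def by (auto simp: power_le_one)
  qed
  have dp: "0 < \<delta>0 * p0" "\<delta>0 * p0 \<le> 1" using d0 p0 by (auto intro: mult_le_one)
  have z2pos: "0 < \<zeta>2" unfolding \<zeta>2_def using dp m0 assms(1) by auto
  have L2pos: "0 < \<Lambda>2"
  proof -
    have "ln (1 - \<delta>0 * p0 / 2) < 0" using dp by (intro ln_less_zero) auto
    moreover have "0 < 2 * real m0" using m0 by simp
    ultimately have "ln (1 - \<delta>0 * p0 / 2) / (2 * real m0) < 0" by (rule divide_neg_pos)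
    then show ?thesis unfolding \<Lambda>2_def by simp
  qed
  show ?thesis
  proof (rule exI[of _ \<zeta>2], intro conjI allI impI z2pos)
    fix \<zeta> :: real assume \<zeta>: "0 \<le> \<zeta> \<and> \<zeta> < \<zeta>2"
    show "\<exists>\<Lambda>2 > 0. \<forall>(d::nat) w (M::'a measure) B \<eta> X0 x.
        d \<ge> 1 \<and> rbcbo_model N P \<gamma> \<zeta> d w M B \<eta> X0 x \<longrightarrow>
        (\<exists>C :: nat \<Rightarrow> 'a \<Rightarrow> real.
           (\<forall>l\<in>{1..d}. C l \<in> borel_measurable M \<and> (\<forall>\<omega>\<in>space M. 0 < C l \<omega>)) \<and>
           (AE \<omega> in M. \<forall>n::nat.
              (\<forall>l\<in>{1..d}. spread N (\<lambda>i. x n i l \<omega>) \<le> C l \<omega> * exp (- \<Lambda>2 * real n)) \<and>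
              (MAX (i, j)\<in>{1..N} \<times> {1..N}. MAX l\<in>{1..d}. \<bar>x n i l \<omega> - x n j l \<omega>\<bar>)
                 \<le> (MAX l\<in>{1..d}. C l \<omega>) * exp (- \<Lambda>2 * real n)))"
    proof (rule exI[of _ \<Lambda>2], intro conjI allI impI L2pos)
      fix d :: nat and w and M :: "'a measure" and B \<eta> X0 x
      assume H: "1 \<le> d \<and> rbcbo_model N P \<gamma> \<zeta> d w M B \<eta> X0 x"
      interpret R: rbm N P \<gamma> \<zeta> d w M B \<eta> X0 x m0 Ps
      proof (rule rbm.intro)
        show "rbcbo_model N P \<gamma> \<zeta> d w M B \<eta> X0 x" using H by (rule conjunct2)
        show "2 \<le> N" by (rule assms(1))
        show "2 \<le> P" by (rule assms(2))
        show "0 < \<gamma>" by (rule assms(3))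
        show "\<gamma> < 1" by (rule assms(4))
        show "0 < m0" by (rule m0)
        show "\<And>k. k \<in> {1..m0} \<Longrightarrow> Ps k \<in> batch_partitions N P" by (rule Ps)
        show "\<And>i j. i \<in> {1..N} \<Longrightarrow> j \<in> {1..N} \<Longrightarrow> \<exists>k\<in>{1..m0}. \<exists>S\<in>Ps k. i \<in> S \<and> j \<in> S"
          by (rule cov)
      qed
      have eqz: "R.z2 = \<zeta>2" unfolding R.z2_def R.\<delta>_def R.pG_def \<zeta>2_def \<delta>0_def p0_def ..
      have eqL: "R.\<Lambda> = \<Lambda>2" unfolding R.\<Lambda>_def R.\<rho>_def R.\<delta>_def R.pG_def \<Lambda>2_def \<delta>0_def p0_def ..
      have ex: "\<forall>l\<in>{1..d}. \<exists>C. C \<in> borel_measurable M \<and> (\<forall>\<omega>\<in>space M. 0 < C \<omega>) \<and>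
          (AE \<omega> in M. \<forall>n. R.Dl l n \<omega> \<le> C \<omega> * exp (- \<Lambda>2 * real n))"
      proof
        fix l assume l: "l \<in> {1..d}"
        have z': "\<zeta> < R.z2" using \<zeta> eqz by simp
        have z0: "0 \<le> \<zeta>" using \<zeta> by simp
        show "\<exists>C. C \<in> borel_measurable M \<and> (\<forall>\<omega>\<in>space M. 0 < C \<omega>) \<and>
          (AE \<omega> in M. \<forall>n. R.Dl l n \<omega> \<le> C \<omega> * exp (- \<Lambda>2 * real n))"
          using R.coord[OF l z0 z'] unfolding eqL .
      qed
      obtain C where C: "\<forall>l\<in>{1..d}. C l \<in> borel_measurable M \<and> (\<forall>\<omega>\<in>space M. 0 < C l \<omega>) \<and>
          (AE \<omega> in M. \<forall>n. R.Dl l n \<omega> \<le> C l \<omega> * exp (- \<Lambda>2 * real n))"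
        using bchoice[OF ex] by blast
      have AEall: "AE \<omega> in M. \<forall>l\<in>{1..d}. \<forall>n. R.Dl l n \<omega> \<le> C l \<omega> * exp (- \<Lambda>2 * real n)"
        by (rule AE_finite_allI) (use C in auto)
      show "\<exists>C :: nat \<Rightarrow> 'a \<Rightarrow> real.
           (\<forall>l\<in>{1..d}. C l \<in> borel_measurable M \<and> (\<forall>\<omega>\<in>space M. 0 < C l \<omega>)) \<and>
           (AE \<omega> in M. \<forall>n::nat.
              (\<forall>l\<in>{1..d}. spread N (\<lambda>i. x n i l \<omega>) \<le> C l \<omega> * exp (- \<Lambda>2 * real n)) \<and>
              (MAX (i, j)\<in>{1..N} \<times> {1..N}. MAX l\<in>{1..d}. \<bar>x n i l \<omega> - x n j l \<omega>\<bar>)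
                 \<le> (MAX l\<in>{1..d}. C l \<omega>) * exp (- \<Lambda>2 * real n))"
      proof (rule exI[of _ C], intro conjI)
        show "\<forall>l\<in>{1..d}. C l \<in> borel_measurable M \<and> (\<forall>\<omega>\<in>space M. 0 < C l \<omega>)" using C by blast
        show "AE \<omega> in M. \<forall>n::nat.
              (\<forall>l\<in>{1..d}. spread N (\<lambda>i. x n i l \<omega>) \<le> C l \<omega> * exp (- \<Lambda>2 * real n)) \<and>
              (MAX (i, j)\<in>{1..N} \<times> {1..N}. MAX l\<in>{1..d}. \<bar>x n i l \<omega> - x n j l \<omega>\<bar>)
                 \<le> (MAX l\<in>{1..d}. C l \<omega>) * exp (- \<Lambda>2 * real n)"
          using AEall
        proof (rule AE_mp, intro AE_I2 impI allI conjI)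
          fix \<omega> n
          assume "\<omega> \<in> space M" and A: "\<forall>l\<in>{1..d}. \<forall>n. R.Dl l n \<omega> \<le> C l \<omega> * exp (- \<Lambda>2 * real n)"
          show sp: "\<forall>l\<in>{1..d}. spread N (\<lambda>i. x n i l \<omega>) \<le> C l \<omega> * exp (- \<Lambda>2 * real n)"
            using A unfolding R.Dl_def by blast
          have dne: "{1..d} \<noteq> {}" using H by auto
          have inner: "(MAX l\<in>{1..d}. \<bar>x n i l \<omega> - x n j l \<omega>\<bar>) \<le> (MAX l\<in>{1..d}. C l \<omega>) * exp (- \<Lambda>2 * real n)"
            if ij: "i \<in> {1..N}" "j \<in> {1..N}" for i j
          proof -
            have "\<bar>x n i l \<omega> - x n j l \<omega>\<bar> \<le> (MAX l\<in>{1..d}. C l \<omega>) * exp (- \<Lambda>2 * real n)"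
              if l: "l \<in> {1..d}" for l
            proof -
              have "\<bar>x n i l \<omega> - x n j l \<omega>\<bar> \<le> spread N (\<lambda>i. x n i l \<omega>)"
                using spread_abs[OF ij, of "\<lambda>i. x n i l \<omega>"] by simp
              also have "\<dots> \<le> C l \<omega> * exp (- \<Lambda>2 * real n)" using sp l by blast
              also have "\<dots> \<le> (MAX l\<in>{1..d}. C l \<omega>) * exp (- \<Lambda>2 * real n)"
                using l by (intro mult_right_mono) auto
              finally show ?thesis .
            qed
            then show ?thesis using dne by (simp add: Max_le_iff)
          qed
          have pne: "{1..N} \<times> {1..N} \<noteq> {}" using assms(1) by auto
          show "(MAX (i, j)\<in>{1..N} \<times> {1..N}. MAX l\<in>{1..d}. \<bar>x n i l \<omega> - x n j l \<omega>\<bar>)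
                 \<le> (MAX l\<in>{1..d}. C l \<omega>) * exp (- \<Lambda>2 * real n)"
            using pne inner by (auto simp: Max_le_iff)
        qed
      qed
    qed
  qed
qed

end
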